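(* Let $p\in[1,\infty)$, $M>0$, let $x^N\in\mathcal K_N$ for each $N\in\mathbb N$, and set $\hat\mu^N=\mathcal E^N(x^N)$, $\mu^N=\mathcal{PC}^N(x^N)$. Let $\mu\in\mathscr P(\mathbb R)$. Then: (i) $\hat\mu^N\to\mu$ vaguely if and only if $\mu^N\to\mu$ vaguely; (ii) the $p$-th moments of $(\hat\mu^N)_N$ are equi-integrable if and only if the $p$-th moments of $(\mu^N)_N$ are equi-integrable; (iii) $\mathbb W_p(\hat\mu^N,\mu)\to0$ if and only if $\mathbb W_p(\mu^N,\mu)\to0$.
   Context: $\mathcal K_N=\{x=(x_0,\dots,x_N)\in\mathbb R^{N+1}:x_{i+1}-x_i\ge 1/(NM)\ \forall i\}$. For $x\in\mathcal K_N$: $R_i^N(x)=1/(N(x_{i+1}-x_i))$, $\mathcal{PC}^N(x)=\sum_{i=0}^{N-1}R_i^N(x)\mathbb 1_{[x_i,x_{i+1}]}\mathscr L^1$ (so each interval $[x_i,x_{i+1}]$ has mass $1/N$) and $\mathcal E^N(x)=\frac1{N+1}\sum_{i=0}^N\delta_{x_i}$. Equi-integrability of $p$-th moments of $(\mu^N)$: for every $\varepsilon>0$ there is $L>0$ with $\limsup_N\int_{\mathbb R\setminus[-L,L]}|x|^p\,d\mu^N<\varepsilon$. Vague convergence is convergence against $C_c(\mathbb R)$. *)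

theory Defs
  imports "HOL-Probability.Probability"
begin

text \<open>Configurations: x = (x_0,...,x_N) is represented by a function nat => real,
  only the values at indices 0..N matter.\<close>
definition KN :: "nat \<Rightarrow> real \<Rightarrow> (nat \<Rightarrow> real) \<Rightarrow> bool" where
  "KN N M x \<longleftrightarrow> (\<forall>i<N. x (Suc i) - x i \<ge> 1 / (real N * M))"

definition RN :: "nat \<Rightarrow> (nat \<Rightarrow> real) \<Rightarrow> nat \<Rightarrow> real" where
  "RN N x i = 1 / (real N * (x (Suc i) - x i))"

definition PC :: "nat \<Rightarrow> (nat \<Rightarrow> real) \<Rightarrow> real measure" where
  "PC N x = density lborel
     (\<lambda>t. \<Sum>i<N. ennreal (RN N x i) * indicator {x i..x (Suc i)} t)"

text \<open>Empirical measure E^N(x) = 1/(N+1) sum_{i=0}^N delta_{x_i}.\<close>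
definition EM :: "nat \<Rightarrow> (nat \<Rightarrow> real) \<Rightarrow> real measure" where
  "EM N x = distr (uniform_measure (count_space {..N}) {..N}) borel x"

definition prob_real :: "real measure \<Rightarrow> bool" where
  "prob_real \<mu> \<longleftrightarrow> prob_space \<mu> \<and> sets \<mu> = sets borel"

definition vague_conv :: "(nat \<Rightarrow> real measure) \<Rightarrow> real measure \<Rightarrow> bool" where
  "vague_conv \<mu>s \<mu> \<longleftrightarrow>
     (\<forall>f :: real \<Rightarrow> real. continuous_on UNIV f \<and> compact (closure {t. f t \<noteq> 0}) \<longrightarrow>
        (\<lambda>N. integral\<^sup>L (\<mu>s N) f) \<longlonglongrightarrow> integral\<^sup>L \<mu> f)"

definition equi_int_moments :: "real \<Rightarrow> (nat \<Rightarrow> real measure) \<Rightarrow> bool" where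
  "equi_int_moments p \<mu>s \<longleftrightarrow>
     (\<forall>\<epsilon>>0. \<exists>L>0. limsup (\<lambda>N. \<integral>\<^sup>+ t. ennreal (\<bar>t\<bar> powr p) * indicator (- {-L..L}) t \<partial>(\<mu>s N))
                     < ennreal \<epsilon>)"

definition couplings :: "real measure \<Rightarrow> real measure \<Rightarrow> (real \<times> real) measure set" where
  "couplings \<mu> \<nu> = {\<pi>. sets \<pi> = sets (borel \<Otimes>\<^sub>M borel) \<and>
        distr \<pi> borel fst = \<mu> \<and> distr \<pi> borel snd = \<nu>}"

definition wass_cost :: "real \<Rightarrow> real measure \<Rightarrow> real measure \<Rightarrow> ennreal" where
  "wass_cost p \<mu> \<nu> = (INF \<pi>\<in>couplings \<mu> \<nu>. \<integral>\<^sup>+ z. ennreal (\<bar>fst z - snd z\<bar> powr p) \<partial>\<pi>)"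

definition Wp :: "real \<Rightarrow> real measure \<Rightarrow> real measure \<Rightarrow> ennreal" where
  "Wp p \<mu> \<nu> = (if wass_cost p \<mu> \<nu> = \<infinity> then \<infinity>
                else ennreal (enn2real (wass_cost p \<mu> \<nu>) powr (1 / p)))"

end

theory Submission
  imports Defs
begin

lemma find_piece_gen:
  fixes f :: "nat \<Rightarrow> real"
  shows "f 0 < y \<Longrightarrow> y \<le> f n \<Longrightarrow> \<exists>i<n. f i < y \<and> y \<le> f (Suc i)"
proof (induction n)
  case 0 then show ?case by simp
next
  case (Suc n)
  show ?case
  proof (cases "y \<le> f n")
    case True then show ?thesis using Suc by (meson less_SucI)
  next
    case False then show ?thesis using Suc by (intro exI[of _ n]) auto
  qed
qed

lemma aux_frac: "(d::real) > 0 \<Longrightarrow> n > 0 \<Longrightarrow> (a + (v - c) / d) / n - (a + (u - c) / d) / n = (v - u) / (n * d)"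
  by (simp add: field_simps)

lemma aux2: assumes "(n::real) > 0" shows "((k - 1) + (n - k + 1) / (n + 1)) / n = k / (n + 1)"
proof -
  have "n + 1 \<noteq> 0" using assms by simp
  then have "(k - 1) + (n - k + 1) / (n + 1) = k * n / (n + 1)"
    by (simp add: field_simps)
  then show ?thesis using assms by simp
qed

lemma aux2': assumes "1 \<le> k" "k \<le> N" "0 < N"
  shows "(real (k - 1) + real (N - k + 1) / real (N + 1)) / real N = real k / real (N + 1)"
proof -
  have eqs: "real (k - 1) = real k - 1" "real (N - k + 1) = real N - real k + 1" "real (N + 1) = real N + 1"
    using assms by (auto simp: of_nat_diff)
  show ?thesis unfolding eqs by (rule aux2) (use assms in simp)
qed

definition cl :: "real \<Rightarrow> real \<Rightarrow> real" where "cl L y = max (- L) (min L y)"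

lemma cl_lo: "- L \<le> cl L y" by (simp add: cl_def)
lemma cl_hi: "L \<ge> 0 \<Longrightarrow> cl L y \<le> L" by (simp add: cl_def)

lemma cl_mono: "a \<le> b \<Longrightarrow> cl L a \<le> cl L b"
  by (auto simp: cl_def)

locale cfg =
  fixes N :: nat and x :: "nat \<Rightarrow> real"
  assumes N1: "1 \<le> N" and incr: "\<And>i. i < N \<Longrightarrow> x i < x (Suc i)"
begin

lemma mono_x: "i \<le> j \<Longrightarrow> j \<le> N \<Longrightarrow> x i \<le> x j"
proof (induction j)
  case 0 then show ?case by simp
next
  case (Suc j)
  then show ?case using incr[of j] by (cases "i = Suc j") force+
qed

lemma smono_x: "i < j \<Longrightarrow> j \<le> N \<Longrightarrow> x i < x j"
  using mono_x[of "Suc i" j] incr[of i] by simp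

lemma inj_x: "inj_on x {..N}"
  by (auto simp: inj_on_def) (metis linorder_neqE_nat smono_x less_irrefl)

definition "R i = RN N x i"
lemma R_pos: "i < N \<Longrightarrow> R i > 0"
  using incr[of i] N1 by (simp add: R_def RN_def)
lemma R_len: "i < N \<Longrightarrow> R i * (x (Suc i) - x i) = 1 / N"
  using incr[of i] N1 by (simp add: R_def RN_def field_simps)

abbreviation "B \<equiv> PC N x"
abbreviation "A \<equiv> EM N x"

lemma sets_B[simp, measurable_cong]: "sets B = sets borel"
  by (simp add: PC_def)
lemma space_B[simp]: "space B = UNIV"
  by (simp add: PC_def)

lemma Icc_borel[measurable]: "{a..b::real} \<in> sets borel" by simp
lemma Ioc_borel[measurable]: "{a<..b::real} \<in> sets borel" by simp
lemma Iic_borel[measurable]: "{..b::real} \<in> sets borel" by simp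

lemma emB: assumes "S \<in> sets borel"
  shows "emeasure B S = (\<Sum>i<N. ennreal (R i) * emeasure lborel ({x i..x (Suc i)} \<inter> S))"
proof -
  note [measurable] = assms
  have "emeasure B S = (\<integral>\<^sup>+ t. (\<Sum>i<N. ennreal (RN N x i) * indicator {x i..x (Suc i)} t) * indicator S t \<partial>lborel)"
    unfolding PC_def using assms
    apply (subst emeasure_density)
    apply measurable[1]
    apply (simp add: assms)
    apply simp
    done
  also have "\<dots> = (\<integral>\<^sup>+ t. (\<Sum>i<N. ennreal (R i) * indicator ({x i..x (Suc i)} \<inter> S) t) \<partial>lborel)"
    by (intro nn_integral_cong) (auto simp: sum_distrib_right R_def indicator_def)
  also have "\<dots> = (\<Sum>i<N. ennreal (R i) * emeasure lborel ({x i..x (Suc i)} \<inter> S))"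
    using assms by (subst nn_integral_sum) (auto simp: nn_integral_cmult_indicator)
  finally show ?thesis .
qed

lemma lborel_Icc_Iic: "emeasure lborel ({a..b} \<inter> {..z}) = ennreal (max 0 (min b z - a))"
proof -
  have "{a..b} \<inter> {..z} = {a..min b z}" by auto
  then show ?thesis by (simp add: emeasure_lborel_Icc_eq max_def)
qed

definition "Gf z = (\<Sum>i<N. R i * max 0 (min (x (Suc i)) z - x i))"

lemma emB_Iic: "emeasure B {..z} = ennreal (Gf z)"
proof -
  have "emeasure B {..z} = (\<Sum>i<N. ennreal (R i) * ennreal (max 0 (min (x (Suc i)) z - x i)))"
    using emB[OF Iic_borel[of z]] by (simp only: lborel_Icc_Iic)
  also have "\<dots> = (\<Sum>i<N. ennreal (R i * max 0 (min (x (Suc i)) z - x i)))"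
    using R_pos by (intro sum.cong refl, subst ennreal_mult) (auto intro: less_imp_le)
  also have "\<dots> = ennreal (Gf z)"
    unfolding Gf_def using R_pos
    by (subst sum_ennreal) (auto intro!: mult_nonneg_nonneg simp: less_imp_le)
  finally show ?thesis .
qed

lemma Gf_piece:
  assumes j: "j < N" and z: "x j \<le> z" "z \<le> x (Suc j)"
  shows "Gf z = (j + (z - x j) / (x (Suc j) - x j)) / N"
proof -
  define f where "f i = (if i < j then 1 / real N else if i = j then (z - x j) / (x (Suc j) - x j) / N else 0)" for i
  have t: "R i * max 0 (min (x (Suc i)) z - x i) = f i" if "i < N" for i
  proof (cases "i < j")
    case True
    then have "x (Suc i) \<le> z" using mono_x[of "Suc i" j] j z by auto
    then show ?thesis using True R_len[OF that] incr[OF that] by (simp add: f_def max_def min_def)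
  next
    case False
    show ?thesis
    proof (cases "i = j")
      case True
      then show ?thesis using z incr[OF j] N1 by (simp add: f_def R_def RN_def max_def min_def field_simps)
    next
      case False
      then have "x (Suc j) \<le> x i" using mono_x[of "Suc j" i] \<open>\<not> i < j\<close> that by auto
      then show ?thesis using False \<open>\<not> i < j\<close> z by (simp add: f_def max_def min_def)
    qed
  qed
  have "Gf z = (\<Sum>i<N. f i)" unfolding Gf_def using t by simp
  also have "\<dots> = (\<Sum>i<Suc j. f i) + (\<Sum>i\<in>{Suc j..<N}. f i)"
    using j by (metis Suc_le_eq lessThan_atLeast0 sum.atLeastLessThan_concat zero_le)
  also have "(\<Sum>i\<in>{Suc j..<N}. f i) = 0" by (auto simp: f_def intro!: sum.neutral)
  also have "(\<Sum>i<Suc j. f i) = (\<Sum>i<j. f i) + f j" by simp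
  also have "(\<Sum>i<j. f i) = j / N" by (simp add: f_def)
  finally show ?thesis by (simp add: f_def add_divide_distrib)
qed

lemma Gf_low: assumes "z \<le> x 0" shows "Gf z = 0"
  unfolding Gf_def
proof (intro sum.neutral ballI)
  fix i assume "i \<in> {..<N}"
  then have "z \<le> x i" using mono_x[of 0 i] assms by auto
  then have "min (x (Suc i)) z - x i \<le> 0" by linarith
  then have "max 0 (min (x (Suc i)) z - x i) = 0" by simp
  then show "R i * max 0 (min (x (Suc i)) z - x i) = 0" by simp
qed

lemma Gf_high: assumes "x N \<le> z" shows "Gf z = 1"
proof -
  have "Gf z = (\<Sum>i<N. 1 / real N)"
    unfolding Gf_def
  proof (intro sum.cong refl)
    fix i assume i: "i \<in> {..<N}"
    then have "x (Suc i) \<le> z" using mono_x[of "Suc i" N] assms by auto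
    then have "min (x (Suc i)) z - x i = x (Suc i) - x i" by linarith
    then show "R i * max 0 (min (x (Suc i)) z - x i) = 1 / real N"
      using R_len[of i] incr[of i] i by (simp add: max_def)
  qed
  then show ?thesis using N1 by simp
qed

lemma emB_UNIV: "emeasure B UNIV = 1"
proof -
  have "emeasure B UNIV = (\<Sum>i<N. ennreal (R i) * ennreal (x (Suc i) - x i))"
    using incr by (simp add: emB less_imp_le)
  also have "\<dots> = (\<Sum>i<N. ennreal (1 / N))"
    using R_pos R_len incr by (intro sum.cong) (auto simp: ennreal_mult[symmetric] less_imp_le)
  also have "\<dots> = ennreal (real N * (1 / N))"
    by (subst ennreal_mult) (auto simp: ennreal_of_nat_eq_real_of_nat)
  also have "real N * (1 / real N) = 1" using N1 by simp
  finally show ?thesis by (simp only: ennreal_1)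
qed

lemma prob_B: "prob_space B"
  by (rule prob_spaceI) (simp add: emB_UNIV)

sublocale Bp: prob_space B by (rule prob_B)

lemma Gf_nonneg: "Gf z \<ge> 0"
  unfolding Gf_def using R_pos by (auto intro!: sum_nonneg mult_nonneg_nonneg simp: less_imp_le)

lemma mB_Iic: "measure B {..z} = Gf z"
  using emB_Iic Gf_nonneg by (simp add: measure_def)

lemma mB_Ioc: assumes "u \<le> v" shows "measure B {u<..v} = Gf v - Gf u"
proof -
  have "{u<..v} = {..v} - {..u}" by auto
  then have "measure B {u<..v} = measure B {..v} - measure B {..u}"
    using assms by (simp add: Bp.finite_measure_Diff)
  then show ?thesis by (simp add: mB_Iic)
qed

lemma mB_sub: assumes "i < N" "x i \<le> u" "u \<le> v" "v \<le> x (Suc i)"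
  shows "measure B {u<..v} = (v - u) / (N * (x (Suc i) - x i))"
proof -
  have "measure B {u<..v} = (i + (v - x i) / (x (Suc i) - x i)) / N - (i + (u - x i) / (x (Suc i) - x i)) / N"
    using assms by (simp add: mB_Ioc Gf_piece)
  also have "\<dots> = (v - u) / (N * (x (Suc i) - x i))"
    using incr[of i] assms N1 aux_frac[of "x (Suc i) - x i" "real N"] by simp
  finally show ?thesis .
qed

lemma mB_piece: "i < N \<Longrightarrow> measure B {x i<..x (Suc i)} = 1 / N"
  using incr[of i] by (simp add: mB_sub)

lemma mB_main: "measure B {x 0<..x N} = 1"
  using mono_x[of 0 N] by (simp add: mB_Ioc Gf_low Gf_high)

lemma AE_B: "AE y in B. x 0 < y \<and> y \<le> x N"
proof -
  have "measure B (- {x 0<..x N}) = 0"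
    using Bp.prob_compl[of "{x 0<..x N}"] mB_main by (simp add: Compl_eq_Diff_UNIV)
  then have "emeasure B (- {x 0<..x N}) = 0"
    by (simp add: Bp.emeasure_eq_measure)
  then show ?thesis
    by (intro AE_I[of _ _ "- {x 0<..x N}"]) auto
qed

lemma find_piece: "x 0 < y \<Longrightarrow> y \<le> x N \<Longrightarrow> \<exists>i<N. x i < y \<and> y \<le> x (Suc i)"
  using find_piece_gen by blast

lemma piece_disj: "i < N \<Longrightarrow> j < N \<Longrightarrow> x i < y \<Longrightarrow> y \<le> x (Suc i) \<Longrightarrow> x j < y \<Longrightarrow> y \<le> x (Suc j) \<Longrightarrow> i = j"
proof (rule ccontr)
  assume "i \<noteq> j" "i < N" "j < N" "x i < y" "y \<le> x (Suc i)" "x j < y" "y \<le> x (Suc j)"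
  then consider "i < j" | "j < i" by linarith
  then show False
  proof cases
    case 1 then show False using mono_x[of "Suc i" j] \<open>j < N\<close> \<open>x j < y\<close> \<open>y \<le> x (Suc i)\<close> by simp
  next
    case 2 then show False using mono_x[of "Suc j" i] \<open>i < N\<close> \<open>x i < y\<close> \<open>y \<le> x (Suc j)\<close> by simp
  qed
qed

lemma piece_upper:
  assumes g[measurable]: "g \<in> borel_measurable borel"
    and le: "\<And>i y. i < N \<Longrightarrow> x i < y \<Longrightarrow> y \<le> x (Suc i) \<Longrightarrow> g y \<le> c i"
  shows "(\<integral>\<^sup>+ y. g y \<partial>B) \<le> (\<Sum>i<N. c i * ennreal (1 / N))"
proof -
  have "(\<integral>\<^sup>+ y. g y \<partial>B) \<le> (\<integral>\<^sup>+ y. (\<Sum>i<N. c i * indicator {x i<..x (Suc i)} y) \<partial>B)"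
  proof (rule nn_integral_mono_AE)
    show "AE y in B. g y \<le> (\<Sum>i<N. c i * indicator {x i<..x (Suc i)} y)"
      using AE_B
    proof eventually_elim
      case (elim y)
      then obtain j where j: "j < N" "x j < y" "y \<le> x (Suc j)" using find_piece by blast
      have "g y \<le> c j * indicator {x j<..x (Suc j)} y" using le[OF j] j by simp
      also have "\<dots> \<le> (\<Sum>i<N. c i * indicator {x i<..x (Suc i)} y)"
        using j by (intro member_le_sum) auto
      finally show ?case .
    qed
  qed
  also have "\<dots> = (\<Sum>i<N. c i * emeasure B {x i<..x (Suc i)})"
    by (subst nn_integral_sum) (auto simp: nn_integral_cmult_indicator)
  also have "\<dots> = (\<Sum>i<N. c i * ennreal (1 / N))"
    by (intro sum.cong refl) (simp add: Bp.emeasure_eq_measure mB_piece)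
  finally show ?thesis .
qed

lemma piece_lower:
  assumes g[measurable]: "g \<in> borel_measurable borel"
  shows "(\<Sum>i<N. \<integral>\<^sup>+ y. g y * indicator {x i<..x (Suc i)} y \<partial>B) \<le> (\<integral>\<^sup>+ y. g y \<partial>B)"
proof -
  have "(\<Sum>i<N. \<integral>\<^sup>+ y. g y * indicator {x i<..x (Suc i)} y \<partial>B)
      = (\<integral>\<^sup>+ y. (\<Sum>i<N. g y * indicator {x i<..x (Suc i)} y) \<partial>B)"
    by (subst nn_integral_sum) auto
  also have "\<dots> \<le> (\<integral>\<^sup>+ y. g y \<partial>B)"
  proof (rule nn_integral_mono)
    fix y
    show "(\<Sum>i<N. g y * indicator {x i<..x (Suc i)} y) \<le> g y"
    proof (cases "\<exists>j<N. x j < y \<and> y \<le> x (Suc j)")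
      case True
      then obtain j where j: "j < N" "x j < y" "y \<le> x (Suc j)" by blast
      have "(\<Sum>i<N. g y * indicator {x i<..x (Suc i)} y) = (\<Sum>i\<in>{j}. g y * indicator {x i<..x (Suc i)} y)"
        using j piece_disj by (intro sum.mono_neutral_right) (auto simp: indicator_def)
      then show ?thesis using j by simp
    next
      case False
      have "(\<Sum>i<N. g y * indicator {x i<..x (Suc i)} y) = 0"
      proof (intro sum.neutral ballI)
        fix i assume "i \<in> {..<N}"
        then have "y \<notin> {x i<..x (Suc i)}" using False by auto
        then show "g y * indicator {x i<..x (Suc i)} y = 0" by simp
      qed
      then show ?thesis by (simp only: zero_le)
    qed
  qed
  finally show ?thesis .
qed

lemma sets_A[simp, measurable_cong]: "sets A = sets borel"
  by (simp add: EM_def)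
lemma space_A[simp]: "space A = UNIV"
  by (simp add: EM_def)

lemma nn_A: assumes [measurable]: "g \<in> borel_measurable borel"
  shows "(\<integral>\<^sup>+ t. g t \<partial>A) = (\<Sum>k\<le>N. g (x k) * ennreal (1 / (N + 1)))"
proof -
  have "(\<integral>\<^sup>+ t. g t \<partial>A) = (\<integral>\<^sup>+ k. g (x k) \<partial>uniform_measure (count_space {..N}) {..N})"
    unfolding EM_def by (subst nn_integral_distr) auto
  also have "\<dots> = (\<integral>\<^sup>+ k. g (x k) * indicator {..N} k \<partial>count_space {..N}) / emeasure (count_space {..N}) {..N}"
    by (subst nn_integral_uniform_measure) auto
  also have "\<dots> = (\<Sum>k\<le>N. g (x k)) / of_nat (N + 1)"
    by (subst nn_integral_count_space_finite) (auto intro!: sum.cong)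
  also have "\<dots> = (\<Sum>k\<le>N. g (x k)) * inverse (ennreal (real (N + 1)))"
    by (simp only: divide_ennreal_def ennreal_of_nat_eq_real_of_nat)
  also have "inverse (ennreal (real (N + 1))) = ennreal (1 / (N + 1))"
    by (subst inverse_ennreal) (auto simp: inverse_eq_divide)
  also have "(\<Sum>k\<le>N. g (x k)) * ennreal (1 / (N + 1)) = (\<Sum>k\<le>N. g (x k) * ennreal (1 / (N + 1)))"
    by (simp add: sum_distrib_right)
  finally show ?thesis .
qed

lemma emA: assumes "C \<in> sets borel"
  shows "emeasure A C = (\<Sum>k\<le>N. indicator C (x k) * ennreal (1 / (N + 1)))"
  using nn_A[of "indicator C"] assms by (simp add: nn_integral_indicator)

lemma prob_A: "prob_space A"
proof (rule prob_spaceI)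
  have "emeasure A (space A) = (\<Sum>k\<le>N. ennreal (1 / (N + 1)))"
    using emA[of UNIV] by simp
  also have "\<dots> = ennreal (real (N + 1) * (1 / (N + 1)))"
    by (subst ennreal_mult) (auto simp: ennreal_of_nat_eq_real_of_nat)
  also have "real (N + 1) * (1 / (N + 1)) = 1" by simp
  finally show "emeasure A (space A) = 1" by (simp only: ennreal_1)
qed

definition "z k = x (k - 1) + (real (N - k + 1) / (N + 1)) * (x k - x (k - 1))"

lemma z_bounds: assumes "1 \<le> k" "k \<le> N" shows "x (k - 1) < z k" "z k < x k"
proof -
  have d: "x k - x (k - 1) > 0" using incr[of "k - 1"] assms by simp
  have t: "0 < real (N - k + 1) / (N + 1)" "real (N - k + 1) / (N + 1) < 1" using assms by auto
  show "x (k - 1) < z k" unfolding z_def using d t by simp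
  have "real (N - k + 1) / (N + 1) * (x k - x (k - 1)) < 1 * (x k - x (k - 1))"
    using d t by (intro mult_strict_right_mono) auto
  then show "z k < x k" unfolding z_def by simp
qed

lemma z_mono: assumes "1 \<le> a" "a < b" "b \<le> N" shows "z a < z b"
proof -
  have "z a < x a" using z_bounds assms by auto
  also have "x a \<le> x (b - 1)" using assms by (intro mono_x) auto
  also have "x (b - 1) < z b" using z_bounds assms by auto
  finally show ?thesis .
qed

lemma Gf_z: assumes "1 \<le> k" "k \<le> N" shows "Gf (z k) = k / (N + 1)"
proof -
  have k1: "Suc (k - 1) = k" using assms by simp
  have d: "x k - x (k - 1) > 0" using incr[of "k - 1"] assms by simp
  have "Gf (z k) = (real (k - 1) + (z k - x (k - 1)) / (x k - x (k - 1))) / N"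
    using Gf_piece[of "k - 1" "z k"] z_bounds[OF assms] assms k1 by simp
  also have "(z k - x (k - 1)) / (x k - x (k - 1)) = real (N - k + 1) / real (N + 1)"
    using d unfolding z_def by simp
  also have "(real (k - 1) + real (N - k + 1) / real (N + 1)) / real N = real k / real (N + 1)"
    by (rule aux2') (use assms N1 in auto)
  finally show ?thesis by simp
qed

definition "J k = {y. (k = 0 \<or> z k < y) \<and> (k = N \<or> y \<le> z (Suc k))}"

lemma J_borel[measurable]: "J k \<in> sets borel"
proof -
  have "J k = (if k = 0 then UNIV else {z k<..}) \<inter> (if k = N then UNIV else {..z (Suc k)})"
    by (auto simp: J_def)
  then show ?thesis by simp
qed

lemma J_setsB[measurable]: "J k \<in> sets B"
  using J_borel by simp

lemma J_unique: "k \<le> N \<Longrightarrow> j \<le> N \<Longrightarrow> y \<in> J k \<Longrightarrow> y \<in> J j \<Longrightarrow> k = j"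
proof (rule ccontr)
  assume *: "k \<le> N" "j \<le> N" "y \<in> J k" "y \<in> J j" "k \<noteq> j"
  { fix a b assume ab: "a < b" "b \<le> N" "y \<in> J a" "y \<in> J b"
    then have "y \<le> z (Suc a)" "z b < y" by (auto simp: J_def)
    moreover have "z (Suc a) \<le> z b" using z_mono[of "Suc a" b] ab by (cases "Suc a = b") auto
    ultimately have False by simp }
  then show False using * by (metis linorder_neqE_nat)
qed

lemma J_exists: "\<exists>k\<le>N. y \<in> J k"
proof (cases "y \<le> z 1")
  case True then show ?thesis using N1 by (intro exI[of _ 0]) (auto simp: J_def)
next
  case False
  show ?thesis
  proof (cases "z N < y")
    case True then show ?thesis using N1 by (intro exI[of _ N]) (auto simp: J_def)
  next
    case False2: False
    define f where "f i = z (Suc i)" for i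
    have "f 0 < y" "y \<le> f (N - 1)" using False False2 N1 by (auto simp: f_def)
    then obtain i where "i < N - 1" "f i < y" "y \<le> f (Suc i)" using find_piece_gen[of f y "N - 1"] by blast
    then show ?thesis by (intro exI[of _ "Suc i"]) (auto simp: J_def f_def)
  qed
qed

lemma sum_ind_J: "(\<Sum>k\<le>N. indicator (J k) y :: ennreal) = 1"
proof -
  obtain j where j: "j \<le> N" "y \<in> J j" using J_exists by blast
  have "(\<Sum>k\<le>N. indicator (J k) y :: ennreal) = (\<Sum>k\<in>{j}. indicator (J k) y)"
    using j J_unique by (intro sum.mono_neutral_right) (auto simp: indicator_def)
  then show ?thesis using j by simp
qed

lemma mB_J: assumes "k \<le> N" shows "measure B (J k) = 1 / (N + 1)"
proof -
  consider "k = 0" | "1 \<le> k" "k < N" | "k = N" "k \<noteq> 0" using assms N1 by linarith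
  then show ?thesis
  proof cases
    case 1
    then have "J k = {..z 1}" using N1 by (auto simp: J_def)
    then show ?thesis using Gf_z[of 1] N1 by (simp add: mB_Iic)
  next
    case 2
    then have "J k = {z k<..z (Suc k)}" by (auto simp: J_def)
    moreover have "z k \<le> z (Suc k)" using z_mono[of k "Suc k"] 2 by simp
    ultimately have "measure B (J k) = Gf (z (Suc k)) - Gf (z k)" by (simp add: mB_Ioc)
    also have "\<dots> = (Suc k) / (N + 1) - k / (N + 1)" using Gf_z 2 by simp
    finally show ?thesis by (simp add: diff_divide_distrib[symmetric])
  next
    case 3
    then have "J k = UNIV - {..z N}" by (auto simp: J_def)
    then have "measure B (J k) = 1 - Gf (z N)"
      using Bp.prob_compl[of "{..z N}"] by (simp add: mB_Iic)
    also have "\<dots> = 1 - N / (N + 1)" using Gf_z[of N] N1 by simp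
    finally show ?thesis by (simp add: field_simps)
  qed
qed

definition "S y = (\<Sum>k\<le>N. x k * indicator (J k) y)"

lemma S_meas[measurable]: "S \<in> borel_measurable borel"
  unfolding S_def by measurable

lemma S_eq: "k \<le> N \<Longrightarrow> y \<in> J k \<Longrightarrow> S y = x k"
proof -
  assume k: "k \<le> N" "y \<in> J k"
  have "S y = (\<Sum>j\<in>{k}. x j * indicator (J j) y)"
    unfolding S_def using k J_unique by (intro sum.mono_neutral_right) (auto simp: indicator_def)
  then show ?thesis using k by simp
qed

lemma nn_B_split: assumes [measurable]: "h \<in> borel_measurable borel"
  shows "(\<integral>\<^sup>+ y. h y \<partial>B) = (\<Sum>k\<le>N. \<integral>\<^sup>+ y. h y * indicator (J k) y \<partial>B)"
proof -
  have "(\<integral>\<^sup>+ y. h y \<partial>B) = (\<integral>\<^sup>+ y. (\<Sum>k\<le>N. h y * indicator (J k) y) \<partial>B)"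
    by (intro nn_integral_cong) (simp add: sum_distrib_left[symmetric] sum_ind_J)
  also have "\<dots> = (\<Sum>k\<le>N. \<integral>\<^sup>+ y. h y * indicator (J k) y \<partial>B)"
    by (subst nn_integral_sum) auto
  finally show ?thesis .
qed

lemma emB_J: "k \<le> N \<Longrightarrow> emeasure B (J k) = ennreal (1 / (N + 1))"
  by (simp add: Bp.emeasure_eq_measure mB_J)

lemma nn_S: assumes [measurable]: "g \<in> borel_measurable borel"
  shows "(\<integral>\<^sup>+ y. g (S y) \<partial>B) = (\<integral>\<^sup>+ t. g t \<partial>A)"
proof -
  have "(\<integral>\<^sup>+ y. g (S y) \<partial>B) = (\<Sum>k\<le>N. \<integral>\<^sup>+ y. g (S y) * indicator (J k) y \<partial>B)"
    by (rule nn_B_split) measurable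
  also have "\<dots> = (\<Sum>k\<le>N. \<integral>\<^sup>+ y. g (x k) * indicator (J k) y \<partial>B)"
    by (intro sum.cong refl nn_integral_cong) (auto simp: indicator_def S_eq)
  also have "\<dots> = (\<Sum>k\<le>N. g (x k) * ennreal (1 / (N + 1)))"
    by (intro sum.cong refl) (simp add: nn_integral_cmult_indicator emB_J)
  also have "\<dots> = (\<integral>\<^sup>+ t. g t \<partial>A)" by (simp add: nn_A)
  finally show ?thesis .
qed

lemma distr_S: "distr B borel S = A"
proof (rule measure_eqI)
  fix C assume "C \<in> sets (distr B borel S)"
  then have C[measurable]: "C \<in> sets borel" by simp
  have "emeasure (distr B borel S) C = emeasure B (S -` C)"
    by (subst emeasure_distr) auto
  also have "\<dots> = (\<integral>\<^sup>+ y. indicator (S -` C) y \<partial>B)"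
    using measurable_sets[OF S_meas C] by (intro nn_integral_indicator[symmetric]) simp
  also have "\<dots> = (\<integral>\<^sup>+ y. indicator C (S y) \<partial>B)"
    by (simp add: indicator_def)
  also have "\<dots> = (\<integral>\<^sup>+ t. indicator C t \<partial>A)" by (rule nn_S) simp
  also have "\<dots> = emeasure A C" by simp
  finally show "emeasure (distr B borel S) C = emeasure A C" .
qed simp

lemma S_piece: assumes "i < N" "x i < y" "y \<le> x (Suc i)"
  shows "S y = x i \<or> S y = x (Suc i)"
proof -
  obtain k where k: "k \<le> N" "y \<in> J k" using J_exists by blast
  have "\<not> k < i"
  proof
    assume "k < i"
    then have "y \<le> z (Suc k)" using k assms by (auto simp: J_def)
    also have "z (Suc k) < x (Suc k)" using z_bounds[of "Suc k"] \<open>k < i\<close> assms by simp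
    also have "x (Suc k) \<le> x i" using \<open>k < i\<close> assms by (intro mono_x) auto
    finally show False using assms by simp
  qed
  moreover have "\<not> Suc i < k"
  proof
    assume "Suc i < k"
    have "x (Suc i) \<le> x (k - 1)" using \<open>Suc i < k\<close> k by (intro mono_x) auto
    also have "x (k - 1) < z k" using z_bounds[of k] \<open>Suc i < k\<close> k by simp
    also have "z k < y" using k \<open>Suc i < k\<close> by (auto simp: J_def)
    finally show False using assms by simp
  qed
  ultimately have "k = i \<or> k = Suc i" by linarith
  then show ?thesis using S_eq k by auto
qed

lemma S_dist: assumes "i < N" "x i < y" "y \<le> x (Suc i)"
  shows "\<bar>S y - y\<bar> \<le> x (Suc i) - x i" "x i \<le> S y" "S y \<le> x (Suc i)"
  using S_piece[OF assms] assms incr[of i] by auto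

end

definition gR :: "real \<Rightarrow> real \<Rightarrow> real \<Rightarrow> ennreal" where
  "gR p R t = ennreal (\<bar>t\<bar> powr p) * indicator (- {-R..R}) t"

definition tail :: "real \<Rightarrow> real measure \<Rightarrow> real \<Rightarrow> ennreal" where
  "tail p \<nu> R = (\<integral>\<^sup>+ t. gR p R t \<partial>\<nu>)"

lemma gR_meas[measurable]: "gR p R \<in> borel_measurable borel"
  unfolding gR_def by measurable

lemma gR_simp: "gR p R t = (if R < \<bar>t\<bar> then ennreal (\<bar>t\<bar> powr p) else 0)"
  by (auto simp: gR_def indicator_def)

lemma gR_le_end:
  assumes "a < y" "y \<le> b" "p \<ge> 0"
  shows "gR p R y \<le> gR p R a + gR p R b"
proof (cases "R < \<bar>y\<bar>")
  case False then show ?thesis by (simp add: gR_simp)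
next
  case True
  show ?thesis
  proof (cases "\<bar>b\<bar> \<ge> \<bar>a\<bar>")
    case True
    then have "\<bar>y\<bar> \<le> \<bar>b\<bar>" using assms by auto
    then have "gR p R y \<le> gR p R b" using \<open>R < \<bar>y\<bar>\<close> assms
      by (auto simp: gR_simp intro!: ennreal_leI powr_mono2)
    then show ?thesis by (simp add: add_increasing)
  next
    case False
    then have "\<bar>y\<bar> \<le> \<bar>a\<bar>" using assms by auto
    then have "gR p R y \<le> gR p R a" using \<open>R < \<bar>y\<bar>\<close> assms
      by (auto simp: gR_simp intro!: ennreal_leI powr_mono2)
    then show ?thesis by (simp add: add_increasing2)
  qed
qed

lemma sum_shift_le: "(\<Sum>i<n. f (Suc i)) \<le> (\<Sum>k\<le>n. f k :: ennreal)"
proof -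
  have "(\<Sum>k\<le>n. f k) = (\<Sum>k<Suc n. f k)" by (simp add: lessThan_Suc_atMost)
  also have "\<dots> = f 0 + (\<Sum>i<n. f (Suc i))" by (rule sum.lessThan_Suc_shift)
  finally show ?thesis by simp
qed

lemma sum_less_le: "(\<Sum>i<(n::nat). f i) \<le> (\<Sum>k\<le>n. f k :: ennreal)"
  by (rule sum_mono2) (simp_all add: subset_eq)

context cfg
begin

lemma tail_A: "tail p A L = (\<Sum>k\<le>N. gR p L (x k) * ennreal (1 / (N + 1)))"
  unfolding tail_def by (simp add: nn_A)

lemma Q1: assumes "p \<ge> 0" shows "tail p B L \<le> 4 * tail p A L"
proof -
  let ?g = "gR p L"
  have "tail p B L \<le> (\<Sum>i<N. (?g (x i) + ?g (x (Suc i))) * ennreal (1 / N))"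
    unfolding tail_def by (rule piece_upper) (auto intro: gR_le_end assms)
  also have "\<dots> = ((\<Sum>i<N. ?g (x i)) + (\<Sum>i<N. ?g (x (Suc i)))) * ennreal (1 / N)"
    by (simp only: distrib_right sum_distrib_right sum.distrib)
  also have "\<dots> \<le> (2 * (\<Sum>k\<le>N. ?g (x k))) * ennreal (2 / (N + 1))"
  proof (intro mult_mono)
    show "(\<Sum>i<N. ?g (x i)) + (\<Sum>i<N. ?g (x (Suc i))) \<le> 2 * (\<Sum>k\<le>N. ?g (x k))"
      using add_mono[OF sum_less_le[of "\<lambda>k. ?g (x k)" N] sum_shift_le[of "\<lambda>k. ?g (x k)" N]]
      by (simp add: mult_2)
    show "ennreal (1 / real N) \<le> ennreal (2 / real (N + 1))"
      using N1 by (intro ennreal_leI) (simp add: field_simps)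
  qed auto
  also have "ennreal (2 / real (N + 1)) = 2 * ennreal (1 / (N + 1))"
    using ennreal_mult[of 2 "1 / (N + 1)"] by simp
  also have "2 * (\<Sum>k\<le>N. ?g (x k)) * (2 * ennreal (1 / real (N + 1))) = 4 * tail p A L"
    by (simp add: tail_A sum_distrib_right[symmetric] mult_ac)
  finally show ?thesis .
qed

lemma single_lower:
  assumes i: "i < N" and L: "L \<ge> 0" and p: "p \<ge> 0"
    and m: "max \<bar>x i\<bar> \<bar>x (Suc i)\<bar> > 2 * L"
  shows "ennreal (max \<bar>x i\<bar> \<bar>x (Suc i)\<bar> powr p)
     \<le> ennreal (2 powr (p + 2) * N) * (\<integral>\<^sup>+ y. gR p L y * indicator {x i<..x (Suc i)} y \<partial>B)"
proof -
  define a where "a = x i"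
  define b where "b = x (Suc i)"
  define mm where "mm = max \<bar>a\<bar> \<bar>b\<bar>"
  define l where "l = b - a"
  define d where "d = min l (mm / 2)"
  have ab: "a < b" using incr[OF i] by (simp add: a_def b_def)
  have mpos: "mm > 0" using m L by (simp add: mm_def a_def b_def)
  have lpos: "l > 0" using ab by (simp add: l_def)
  have dpos: "d > 0" using lpos mpos by (simp add: d_def)
  have l2m: "l \<le> 2 * mm" unfolding l_def mm_def by auto
  obtain u v where uv: "a \<le> u" "u \<le> v" "v \<le> b" "v - u = d" "\<And>y. u < y \<Longrightarrow> y \<le> v \<Longrightarrow> mm / 2 \<le> \<bar>y\<bar>"
  proof (cases "\<bar>b\<bar> \<ge> \<bar>a\<bar>")
    case True
    then have "mm = b" using ab by (auto simp: mm_def)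
    show ?thesis
      by (rule that[of "b - d" b]) (use \<open>mm = b\<close> dpos in \<open>auto simp: d_def l_def\<close>)
  next
    case False
    then have "mm = - a" using ab by (auto simp: mm_def)
    show ?thesis
      by (rule that[of a "a + d"]) (use \<open>mm = - a\<close> dpos in \<open>auto simp: d_def l_def\<close>)
  qed
  have "(\<integral>\<^sup>+ y. ennreal ((mm / 2) powr p) * indicator {u<..v} y \<partial>B)
      \<le> (\<integral>\<^sup>+ y. gR p L y * indicator {a<..b} y \<partial>B)"
  proof (rule nn_integral_mono)
    fix y
    show "ennreal ((mm / 2) powr p) * indicator {u<..v} y \<le> gR p L y * indicator {a<..b} y"
    proof (cases "u < y \<and> y \<le> v")
      case True
      then have y: "mm / 2 \<le> \<bar>y\<bar>" "a < y" "y \<le> b" using uv by auto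
      have "2 * L < mm" using m by (simp add: mm_def a_def b_def)
      then have "L < \<bar>y\<bar>" using y(1) by linarith
      then show ?thesis using True y p mpos
        by (auto simp: gR_simp indicator_def intro!: ennreal_leI powr_mono2)
    qed (auto simp: indicator_def)
  qed
  also have "(\<integral>\<^sup>+ y. ennreal ((mm / 2) powr p) * indicator {u<..v} y \<partial>B) = ennreal ((mm / 2) powr p) * emeasure B {u<..v}"
    by (simp add: nn_integral_cmult_indicator)
  also have "emeasure B {u<..v} = ennreal (d / (N * l))"
    using mB_sub[OF i, of u v] uv by (simp add: Bp.emeasure_eq_measure a_def b_def l_def)
  finally have I0: "ennreal ((mm / 2) powr p) * ennreal (d / (N * l)) \<le> (\<integral>\<^sup>+ y. gR p L y * indicator {a<..b} y \<partial>B)" .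
  have "ennreal ((mm / 2) powr p * (d / (N * l))) = ennreal ((mm / 2) powr p) * ennreal (d / (N * l))"
    using dpos lpos by (intro ennreal_mult) auto
  with I0 have I: "ennreal ((mm / 2) powr p * (d / (N * l))) \<le> (\<integral>\<^sup>+ y. gR p L y * indicator {a<..b} y \<partial>B)"
    by simp
  have d4: "l \<le> 4 * d" using l2m lpos mpos by (simp add: d_def)
  have "mm powr p = 2 powr (p + 2) * N * ((mm / 2) powr p * (d / (N * l))) * (l / (4 * d))"
  proof -
    have "(mm / 2) powr p = mm powr p / 2 powr p" using mpos by (simp add: powr_divide)
    moreover have "2 powr (p + 2) = 2 powr p * 4" by (simp add: powr_add)
    ultimately show ?thesis using dpos lpos N1 by (simp add: field_simps)
  qed
  also have "\<dots> \<le> 2 powr (p + 2) * N * ((mm / 2) powr p * (d / (N * l))) * 1"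
    using d4 dpos lpos mpos by (intro mult_left_mono) auto
  finally have "ennreal (mm powr p) \<le> ennreal (2 powr (p + 2) * N) * ennreal ((mm / 2) powr p * (d / (N * l)))"
    using dpos lpos mpos by (subst ennreal_mult[symmetric]) (auto intro!: ennreal_leI simp: mult_ac)
  also have "\<dots> \<le> ennreal (2 powr (p + 2) * N) * (\<integral>\<^sup>+ y. gR p L y * indicator {a<..b} y \<partial>B)"
    by (intro mult_left_mono I) auto
  finally show ?thesis by (simp add: mm_def a_def b_def)
qed

lemma Q2: assumes L: "L \<ge> 0" and p: "p \<ge> 0"
  shows "tail p A (2 * L) \<le> ennreal (2 powr (p + 3)) * tail p B L"
proof -
  define h where "h = gR p (2 * L)"
  define C where "C = 2 powr (p + 2)"
  define I where "I i = (\<integral>\<^sup>+ y. gR p L y * indicator {x i<..x (Suc i)} y \<partial>B)" for i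
  have step1: "h (x i) + h (x (Suc i)) \<le> 2 * (ennreal (C * N) * I i)" if i: "i < N" for i
  proof (cases "max \<bar>x i\<bar> \<bar>x (Suc i)\<bar> > 2 * L")
    case True
    let ?m = "max \<bar>x i\<bar> \<bar>x (Suc i)\<bar>"
    have "h (x i) \<le> ennreal (?m powr p)" "h (x (Suc i)) \<le> ennreal (?m powr p)"
      using p by (auto simp: h_def gR_simp intro!: ennreal_leI powr_mono2)
    then have "h (x i) + h (x (Suc i)) \<le> 2 * ennreal (?m powr p)"
      by (simp add: mult_2 add_mono)
    also have "\<dots> \<le> 2 * (ennreal (C * N) * I i)"
      using single_lower[OF i L p True] by (simp add: C_def I_def mult_left_mono)
    finally show ?thesis .
  next
    case False
    then have "h (x i) = 0" "h (x (Suc i)) = 0" by (auto simp: h_def gR_simp)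
    then show ?thesis by simp
  qed
  have step2: "(\<Sum>k\<le>N. h (x k)) \<le> (\<Sum>i<N. h (x i) + h (x (Suc i)))"
  proof -
    have "(\<Sum>k\<le>N. h (x k)) = (\<Sum>k<Suc N. h (x k))" by (simp add: lessThan_Suc_atMost)
    also have "\<dots> = h (x 0) + (\<Sum>i<N. h (x (Suc i)))" by (rule sum.lessThan_Suc_shift)
    also have "h (x 0) \<le> (\<Sum>i<N. h (x i))"
      using N1 by (intro member_le_sum[where f = "\<lambda>i. h (x i)"]) auto
    finally show ?thesis by (simp add: sum.distrib add_right_mono)
  qed
  have step3: "(\<Sum>i<N. h (x i) + h (x (Suc i))) \<le> 2 * ennreal (C * N) * tail p B L"
  proof -
    have "(\<Sum>i<N. h (x i) + h (x (Suc i))) \<le> (\<Sum>i<N. 2 * (ennreal (C * N) * I i))"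
      using step1 by (intro sum_mono) auto
    also have "\<dots> = 2 * ennreal (C * N) * (\<Sum>i<N. I i)"
      by (simp add: sum_distrib_left mult.assoc)
    also have "(\<Sum>i<N. I i) \<le> tail p B L"
      unfolding I_def tail_def by (rule piece_lower) simp
    finally show ?thesis by (simp add: mult_left_mono)
  qed
  have "tail p A (2 * L) = (\<Sum>k\<le>N. h (x k)) * ennreal (1 / (N + 1))"
    by (simp add: tail_A h_def sum_distrib_right)
  also have "\<dots> \<le> 2 * ennreal (C * N) * tail p B L * ennreal (1 / (N + 1))"
    using step2 step3 by (intro mult_right_mono) auto
  also have "\<dots> = ennreal (2 * C * N / (N + 1)) * tail p B L"
  proof -
    have "2 * ennreal (C * N) * ennreal (1 / (N + 1)) = ennreal (2 * C * N / (N + 1))"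
      using ennreal_mult[of "2 * C * N" "1 / (N + 1)"] ennreal_mult[of 2 "C * N"]
      by (simp add: C_def mult.assoc)
    then show ?thesis by (metis mult.assoc mult.commute)
  qed
  also have "\<dots> \<le> ennreal (2 powr (p + 3)) * tail p B L"
  proof (intro mult_right_mono ennreal_leI)
    have f: "real N / real (N + 1) \<le> 1" by simp
    have "2 * C * N / (N + 1) = 2 * C * (real N / real (N + 1))" by simp
    also have "\<dots> \<le> 2 * C * 1"
      using f by (intro mult_left_mono) (auto simp: C_def)
    also have "2 * C * 1 = 2 powr (p + 3)"
      unfolding C_def by (simp add: powr_add)
    finally show "2 * C * N / (N + 1) \<le> 2 powr (p + 3)" .
  qed auto
  finally show ?thesis .
qed

definition "eN p = (\<integral>\<^sup>+ y. ennreal (\<bar>S y - y\<bar> powr p) \<partial>B)"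

lemma telescope_cl: assumes "L \<ge> 0"
  shows "(\<Sum>i<N. cl L (x (Suc i)) - cl L (x i)) \<le> 2 * L"
proof -
  have "(\<Sum>i<N. cl L (x (Suc i)) - cl L (x i)) = cl L (x N) - cl L (x 0)"
    by (rule sum_lessThan_telescope)
  also have "\<dots> \<le> 2 * L" using assms by (auto simp: cl_def)
  finally show ?thesis .
qed

lemma len_bound:
  assumes i: "i < N" and L: "L > 0" and p: "p \<ge> 1"
  shows "ennreal ((x (Suc i) - x i) powr p)
    \<le> ennreal ((2 * L) powr (p - 1) * (cl L (x (Suc i)) - cl L (x i)))
       + ennreal (2 powr p) * (gR p L (x i) + gR p L (x (Suc i)))"
proof -
  define a where "a = x i"
  define b where "b = x (Suc i)"
  have ab: "a < b" using incr[OF i] by (simp add: a_def b_def)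
  show ?thesis
  proof (cases "\<bar>a\<bar> \<le> L \<and> \<bar>b\<bar> \<le> L")
    case True
    then have cl: "cl L b - cl L a = b - a" by (auto simp: cl_def)
    have "(b - a) powr p = (b - a) powr (p - 1) * (b - a)"
      using ab by (simp add: powr_diff powr_one[symmetric] del: powr_one) 
    also have "\<dots> \<le> (2 * L) powr (p - 1) * (b - a)"
      using ab True p by (intro mult_right_mono powr_mono2) auto
    finally have "ennreal ((b - a) powr p) \<le> ennreal ((2 * L) powr (p - 1) * (cl L b - cl L a))"
      unfolding cl by (rule ennreal_leI)
    then show ?thesis unfolding a_def b_def by (simp add: add_increasing2)
  next
    case False
    define m where "m = max \<bar>a\<bar> \<bar>b\<bar>"
    have mL: "m > L" using False by (auto simp: m_def)
    have "(b - a) powr p \<le> (2 * m) powr p"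
      using ab p by (intro powr_mono2) (auto simp: m_def)
    also have "\<dots> = 2 powr p * m powr p" using mL L by (simp add: powr_mult)
    finally have 1: "ennreal ((b - a) powr p) \<le> ennreal (2 powr p) * ennreal (m powr p)"
      by (simp add: ennreal_mult[symmetric] ennreal_leI)
    have "ennreal (m powr p) \<le> gR p L a + gR p L b"
    proof (cases "\<bar>a\<bar> \<le> \<bar>b\<bar>")
      case True
      then have "ennreal (m powr p) = gR p L b" using mL by (auto simp: m_def gR_simp)
      then show ?thesis by (simp add: add_increasing)
    next
      case False
      then have "ennreal (m powr p) = gR p L a" using mL by (auto simp: m_def gR_simp)
      then show ?thesis by (simp add: add_increasing2)
    qed
    then have "ennreal ((b - a) powr p) \<le> ennreal (2 powr p) * (gR p L a + gR p L b)"
      using 1 by (meson mult_left_mono order_trans zero_le)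
    then show ?thesis unfolding a_def b_def by (simp add: add_increasing)
  qed
qed

lemma eN_bound:
  assumes L: "L > 0" and p: "p \<ge> 1"
  shows "eN p \<le> ennreal ((2 * L) powr p / N) + ennreal (4 * 2 powr p) * tail p A L"
proof -
  let ?g = "\<lambda>k. gR p L (x k)"
  let ?d = "\<lambda>i. cl L (x (Suc i)) - cl L (x i)"
  have s1a: "eN p \<le> (\<Sum>i<N. ennreal ((x (Suc i) - x i) powr p) * ennreal (1 / N))"
    unfolding eN_def
  proof (rule piece_upper)
    fix i y assume "i < N" "x i < y" "y \<le> x (Suc i)"
    then show "ennreal (\<bar>S y - y\<bar> powr p) \<le> ennreal ((x (Suc i) - x i) powr p)"
      using S_dist[of i y] p by (intro ennreal_leI powr_mono2) auto
  qed measurable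
  then have s1: "eN p \<le> (\<Sum>i<N. ennreal ((x (Suc i) - x i) powr p)) * ennreal (1 / N)"
    by (simp only: sum_distrib_right)
  have "(\<Sum>i<N. ennreal ((x (Suc i) - x i) powr p))
      \<le> (\<Sum>i<N. ennreal ((2 * L) powr (p - 1) * ?d i) + ennreal (2 powr p) * (?g i + ?g (Suc i)))"
    using len_bound[OF _ L p] by (intro sum_mono) auto
  also have "\<dots> = ennreal ((2 * L) powr (p - 1) * (\<Sum>i<N. ?d i)) + ennreal (2 powr p) * (\<Sum>i<N. ?g i + ?g (Suc i))"
  proof -
    have dnn: "0 \<le> ?d i" if "i < N" for i using cl_mono[of "x i" "x (Suc i)" L] incr[OF that] by simp
    have "(\<Sum>i<N. ennreal ((2 * L) powr (p - 1) * ?d i)) = ennreal (\<Sum>i<N. (2 * L) powr (p - 1) * ?d i)"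
      using dnn by (intro sum_ennreal) auto
    also have "(\<Sum>i<N. (2 * L) powr (p - 1) * ?d i) = (2 * L) powr (p - 1) * (\<Sum>i<N. ?d i)"
      by (simp add: sum_distrib_left)
    finally have a: "(\<Sum>i<N. ennreal ((2 * L) powr (p - 1) * ?d i)) = ennreal ((2 * L) powr (p - 1) * (\<Sum>i<N. ?d i))" .
    have b: "(\<Sum>i<N. ennreal (2 powr p) * (?g i + ?g (Suc i))) = ennreal (2 powr p) * (\<Sum>i<N. ?g i + ?g (Suc i))"
      by (simp only: sum_distrib_left)
    show ?thesis by (simp only: sum.distrib a b)
  qed
  finally have s2: "(\<Sum>i<N. ennreal ((x (Suc i) - x i) powr p)) \<le> ennreal ((2 * L) powr (p - 1) * (\<Sum>i<N. ?d i)) + ennreal (2 powr p) * (\<Sum>i<N. ?g i + ?g (Suc i))" .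
  have s3: "ennreal ((2 * L) powr (p - 1) * (\<Sum>i<N. ?d i)) \<le> ennreal ((2 * L) powr (p - 1) * (2 * L))"
    using telescope_cl[of L] L by (intro ennreal_leI mult_left_mono) auto
  have s4: "(\<Sum>i<N. ?g i + ?g (Suc i)) \<le> 2 * (\<Sum>k\<le>N. ?g k)"
    using add_mono[OF sum_less_le[of ?g N] sum_shift_le[of ?g N]] by (simp add: sum.distrib mult_2)
  have 1: "eN p \<le> (ennreal ((2 * L) powr (p - 1) * (2 * L)) + ennreal (2 powr p) * (2 * (\<Sum>k\<le>N. ?g k))) * ennreal (1 / N)"
    using s1 s2 s3 s4 by (meson add_mono mult_left_mono mult_right_mono order_trans zero_le)
  have 2: "(2 * L) powr (p - 1) * (2 * L) = (2 * L) powr p"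
    using L by (simp add: powr_diff)
  have 3: "ennreal ((2 * L) powr p) * ennreal (1 / N) = ennreal ((2 * L) powr p / N)"
    by (simp add: ennreal_mult[symmetric])
  have 4: "(\<Sum>k\<le>N. ?g k) * ennreal (1 / N) \<le> 2 * tail p A L"
  proof -
    have "ennreal (1 / N) \<le> ennreal (2 / (N + 1))"
      using N1 by (intro ennreal_leI) (simp add: field_simps)
    also have "ennreal (2 / (N + 1)) = 2 * ennreal (1 / (N + 1))"
      using ennreal_mult[of 2 "1 / (N + 1)"] by simp
    finally have "ennreal (1 / N) \<le> 2 * ennreal (1 / (N + 1))" .
    then have "(\<Sum>k\<le>N. ?g k) * ennreal (1 / N) \<le> (\<Sum>k\<le>N. ?g k) * (2 * ennreal (1 / (N + 1)))"
      by (rule mult_left_mono) simp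
    also have "\<dots> = 2 * tail p A L" by (simp add: tail_A sum_distrib_right[symmetric] mult_ac)
    finally show ?thesis .
  qed
  have "eN p \<le> ennreal ((2 * L) powr p / N) + ennreal (2 powr p) * 2 * ((\<Sum>k\<le>N. ?g k) * ennreal (1 / N))"
    using 1 unfolding 2 by (simp only: distrib_right 3 mult.assoc)
  also have "\<dots> \<le> ennreal ((2 * L) powr p / N) + ennreal (2 powr p) * 2 * (2 * tail p A L)"
    using 4 by (intro add_left_mono mult_left_mono) auto
  also have "ennreal (2 powr p) * 2 * (2 * tail p A L) = ennreal (4 * 2 powr p) * tail p A L"
    using ennreal_mult[of 4 "2 powr p"] by (simp add: mult_ac)
  finally show ?thesis .
qed

lemma S_measB[measurable]: "S \<in> measurable B borel"
  using S_meas measurable_cong_sets[OF sets_B refl] by blast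

lemma cl_piece_int: assumes L: "L \<ge> 0"
  shows "(\<integral>y. \<bar>cl L y - cl L (S y)\<bar> \<partial>B) \<le> 2 * L / N"
proof -
  let ?d = "\<lambda>i. cl L (x (Suc i)) - cl L (x i)"
  have dnn: "0 \<le> ?d i" if "i < N" for i using cl_mono[of "x i" "x (Suc i)" L] incr[OF that] by simp
  have m[measurable]: "(\<lambda>y. \<bar>cl L y - cl L (S y)\<bar>) \<in> borel_measurable borel"
    unfolding cl_def by measurable
  have "(\<integral>\<^sup>+ y. ennreal \<bar>cl L y - cl L (S y)\<bar> \<partial>B) \<le> (\<Sum>i<N. ennreal (?d i) * ennreal (1 / N))"
  proof (rule piece_upper)
    fix i y assume iy: "i < N" "x i < y" "y \<le> x (Suc i)"
    have "cl L (x i) \<le> cl L y" "cl L y \<le> cl L (x (Suc i))"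
      "cl L (x i) \<le> cl L (S y)" "cl L (S y) \<le> cl L (x (Suc i))"
      using iy S_dist[OF iy] by (auto intro: cl_mono)
    then show "ennreal \<bar>cl L y - cl L (S y)\<bar> \<le> ennreal (?d i)" by (intro ennreal_leI) auto
  qed measurable
  also have "\<dots> = (\<Sum>i<N. ennreal (?d i * (1 / N)))"
  proof (intro sum.cong refl)
    fix i assume "i \<in> {..<N}"
    then show "ennreal (?d i) * ennreal (1 / N) = ennreal (?d i * (1 / N))"
      using dnn by (intro ennreal_mult[symmetric]) auto
  qed
  also have "\<dots> = ennreal (\<Sum>i<N. ?d i * (1 / N))"
    using dnn by (intro sum_ennreal) auto
  also have "(\<Sum>i<N. ?d i * (1 / N)) = (\<Sum>i<N. ?d i) * (1 / N)"
    by (simp only: sum_distrib_right)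
  also have "\<dots> \<le> ennreal (2 * L * (1 / N))"
    using telescope_cl[OF L] by (intro ennreal_leI mult_right_mono) auto
  finally have "(\<integral>\<^sup>+ y. ennreal \<bar>cl L y - cl L (S y)\<bar> \<partial>B) \<le> ennreal (2 * L / N)" by simp
  moreover have "(\<integral>y. \<bar>cl L y - cl L (S y)\<bar> \<partial>B) = enn2real (\<integral>\<^sup>+ y. ennreal \<bar>cl L y - cl L (S y)\<bar> \<partial>B)"
    by (rule integral_eq_nn_integral) auto
  ultimately show ?thesis using L by (simp add: enn2real_leI)
qed

lemma int_diff:
  fixes f :: "real \<Rightarrow> real"
  assumes fm[measurable]: "f \<in> borel_measurable borel" and bd: "\<And>y. \<bar>f y\<bar> \<le> Bd"
    and L: "L \<ge> 0" and K: "K \<ge> 0"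
    and lip: "\<And>s t. \<bar>f s - f t\<bar> \<le> \<epsilon> + K * \<bar>cl L s - cl L t\<bar>"
  shows "\<bar>(\<integral>y. f y \<partial>B) - (\<integral>y. f y \<partial>A)\<bar> \<le> \<epsilon> + K * (2 * L / N)"
proof -
  have clm[measurable]: "cl L \<in> borel_measurable borel" unfolding cl_def by measurable
  have iA: "(\<integral>y. f y \<partial>A) = (\<integral>y. f (S y) \<partial>B)"
    unfolding distr_S[symmetric] by (rule integral_distr) auto
  have int1: "integrable B f" by (rule Bp.integrable_const_bound[of _ Bd]) (auto simp: bd)
  have int2: "integrable B (\<lambda>y. f (S y))" by (rule Bp.integrable_const_bound[of _ Bd]) (auto simp: bd)
  have int3: "integrable B (\<lambda>y. \<bar>cl L y - cl L (S y)\<bar>)"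
  proof (rule Bp.integrable_const_bound[of _ "2 * L"])
    have "\<bar>cl L y - cl L (S y)\<bar> \<le> 2 * L" for y
      using cl_lo[of L y] cl_hi[OF L, of y] cl_lo[of L "S y"] cl_hi[OF L, of "S y"] by linarith
    then show "AE y in B. norm \<bar>cl L y - cl L (S y)\<bar> \<le> 2 * L" by simp
  qed simp
  have "\<bar>(\<integral>y. f y \<partial>B) - (\<integral>y. f (S y) \<partial>B)\<bar> = \<bar>\<integral>y. f y - f (S y) \<partial>B\<bar>"
    using int1 int2 by simp
  also have "\<dots> \<le> (\<integral>y. \<epsilon> + K * \<bar>cl L y - cl L (S y)\<bar> \<partial>B)"
    using int1 int2 int3 lip by (intro integral_abs_bound_integral) auto
  also have "\<dots> = \<epsilon> + K * (\<integral>y. \<bar>cl L y - cl L (S y)\<bar> \<partial>B)"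
    using int3 Bp.prob_space by simp
  also have "\<dots> \<le> \<epsilon> + K * (2 * L / N)"
    using cl_piece_int[OF L] K by (intro add_left_mono mult_left_mono) auto
  finally show ?thesis by (simp add: iA)
qed

end

lemma emeasure_distr_nn:
  assumes "f \<in> measurable M N" "C \<in> sets N"
  shows "emeasure (distr M N f) C = (\<integral>\<^sup>+ x. indicator C (f x) \<partial>M)"
proof -
  have "emeasure (distr M N f) C = emeasure M (f -` C \<inter> space M)"
    using assms by (rule emeasure_distr)
  also have "\<dots> = (\<integral>\<^sup>+ x. indicator (f -` C \<inter> space M) x \<partial>M)"
    using measurable_sets[OF assms] by (rule nn_integral_indicator[symmetric])
  also have "\<dots> = (\<integral>\<^sup>+ x. indicator C (f x) \<partial>M)"
    by (intro nn_integral_cong) (auto simp: indicator_def)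
  finally show ?thesis .
qed

definition cost :: "real \<Rightarrow> (real \<times> real) measure \<Rightarrow> ennreal" where
  "cost p \<pi> = (\<integral>\<^sup>+ z. ennreal (\<bar>fst z - snd z\<bar> powr p) \<partial>\<pi>)"

lemma wass_cost_cost: "wass_cost p \<mu> \<nu> = (INF \<pi>\<in>couplings \<mu> \<nu>. cost p \<pi>)"
  unfolding wass_cost_def cost_def ..

lemma powr_tri: fixes a b c :: real assumes p: "p \<ge> 0"
  shows "\<bar>a - c\<bar> powr p \<le> 2 powr p * (\<bar>a - b\<bar> powr p + \<bar>b - c\<bar> powr p)"
proof -
  define m where "m = max \<bar>a - b\<bar> \<bar>b - c\<bar>"
  have "\<bar>a - c\<bar> \<le> \<bar>a - b\<bar> + \<bar>b - c\<bar>" using abs_triangle_ineq[of "a - b" "b - c"] by simp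
  then have "\<bar>a - c\<bar> \<le> 2 * m" unfolding m_def by (auto simp: max_def)
  then have "\<bar>a - c\<bar> powr p \<le> (2 * m) powr p" using p by (intro powr_mono2) auto
  also have "\<dots> = 2 powr p * m powr p" by (simp add: powr_mult m_def)
  also have "m powr p \<le> \<bar>a - b\<bar> powr p + \<bar>b - c\<bar> powr p" by (simp add: m_def max_def)
  finally show ?thesis by simp
qed

lemma powr_tri_enn: fixes a b c :: real assumes p: "p \<ge> 0"
  shows "ennreal (\<bar>a - c\<bar> powr p) \<le> ennreal (2 powr p) * (ennreal (\<bar>a - b\<bar> powr p) + ennreal (\<bar>b - c\<bar> powr p))"
  using powr_tri[OF p, of a c b] by (simp add: ennreal_mult[symmetric] ennreal_plus[symmetric] del: ennreal_plus)

lemma couplingsD: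
  assumes "\<pi> \<in> couplings \<mu> \<nu>"
  shows "sets \<pi> = sets (borel \<Otimes>\<^sub>M borel)" "distr \<pi> borel fst = \<mu>" "distr \<pi> borel snd = \<nu>"
  using assms by (auto simp: couplings_def)

lemma couplings_meas:
  assumes "\<pi> \<in> couplings \<mu> \<nu>" "f \<in> measurable (borel \<Otimes>\<^sub>M borel) M"
  shows "f \<in> measurable \<pi> M"
  using assms couplingsD(1)[OF assms(1)] measurable_cong_sets by blast

lemma nn_fst: assumes "\<pi> \<in> couplings \<mu> \<nu>" and [measurable]: "g \<in> borel_measurable borel"
  shows "(\<integral>\<^sup>+ z. g (fst z) \<partial>\<pi>) = (\<integral>\<^sup>+ t. g t \<partial>\<mu>)"
proof -
  have m: "fst \<in> measurable \<pi> borel" by (rule couplings_meas[OF assms(1)]) simp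
  have "(\<integral>\<^sup>+ z. g (fst z) \<partial>\<pi>) = (\<integral>\<^sup>+ t. g t \<partial>(distr \<pi> borel fst))"
    by (rule nn_integral_distr[symmetric, OF m]) simp
  then show ?thesis using couplingsD(2)[OF assms(1)] by simp
qed

lemma nn_snd: assumes "\<pi> \<in> couplings \<mu> \<nu>" and [measurable]: "g \<in> borel_measurable borel"
  shows "(\<integral>\<^sup>+ z. g (snd z) \<partial>\<pi>) = (\<integral>\<^sup>+ t. g t \<partial>\<nu>)"
proof -
  have m: "snd \<in> measurable \<pi> borel" by (rule couplings_meas[OF assms(1)]) simp
  have "(\<integral>\<^sup>+ z. g (snd z) \<partial>\<pi>) = (\<integral>\<^sup>+ t. g t \<partial>(distr \<pi> borel snd))"
    by (rule nn_integral_distr[symmetric, OF m]) simp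
  then show ?thesis using couplingsD(3)[OF assms(1)] by simp
qed

lemma tail_coupling:
  assumes \<pi>: "\<pi> \<in> couplings \<nu> \<mu>" and p: "p \<ge> 0" and L: "L \<ge> 0"
  shows "tail p \<nu> L \<le> ennreal (2 powr p) * (cost p \<pi> + tail p \<mu> (L / 2))"
proof -
  have pw: "gR p L s \<le> ennreal (2 powr p) * (ennreal (\<bar>s - t\<bar> powr p) + gR p (L / 2) t)" for s t
  proof (cases "L < \<bar>s\<bar>")
    case False then show ?thesis by (simp add: gR_simp)
  next
    case True
    show ?thesis
    proof (cases "L / 2 < \<bar>t\<bar>")
      case True2: True
      have "ennreal (\<bar>s - 0\<bar> powr p) \<le> ennreal (2 powr p) * (ennreal (\<bar>s - t\<bar> powr p) + ennreal (\<bar>t - 0\<bar> powr p))"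
        by (rule powr_tri_enn[OF p])
      then show ?thesis using True True2 by (simp add: gR_simp)
    next
      case False
      then have "\<bar>s\<bar> \<le> 2 * \<bar>s - t\<bar>" using True abs_triangle_ineq2[of s t] by (smt (verit) field_sum_of_halves)
      then have "\<bar>s\<bar> powr p \<le> (2 * \<bar>s - t\<bar>) powr p" using p by (intro powr_mono2) auto
      also have "\<dots> = 2 powr p * \<bar>s - t\<bar> powr p" by (simp add: powr_mult)
      finally have "ennreal (\<bar>s\<bar> powr p) \<le> ennreal (2 powr p) * ennreal (\<bar>s - t\<bar> powr p)"
        by (simp add: ennreal_mult[symmetric] ennreal_leI)
      then show ?thesis using True False by (simp add: gR_simp)
    qed
  qed
  have "tail p \<nu> L = (\<integral>\<^sup>+ z. gR p L (fst z) \<partial>\<pi>)"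
    unfolding tail_def by (rule nn_fst[OF \<pi>, symmetric]) simp
  also have "\<dots> \<le> (\<integral>\<^sup>+ z. ennreal (2 powr p) * (ennreal (\<bar>fst z - snd z\<bar> powr p) + gR p (L / 2) (snd z)) \<partial>\<pi>)"
    by (intro nn_integral_mono pw)
  also have "\<dots> = ennreal (2 powr p) * (cost p \<pi> + (\<integral>\<^sup>+ z. gR p (L / 2) (snd z) \<partial>\<pi>))"
  proof -
    have m0[measurable]: "(\<lambda>z. \<bar>fst z - snd z\<bar> powr p) \<in> borel_measurable \<pi>"
      by (rule couplings_meas[OF \<pi>]) measurable
    have m1[measurable]: "(\<lambda>z. ennreal (\<bar>fst z - snd z\<bar> powr p)) \<in> borel_measurable \<pi>"
      by (rule couplings_meas[OF \<pi>]) measurable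
    have m2[measurable]: "(\<lambda>z. gR p (L / 2) (snd z)) \<in> borel_measurable \<pi>"
      by (rule couplings_meas[OF \<pi>]) measurable
    show ?thesis unfolding cost_def
      by (subst nn_integral_cmult) (measurable, subst nn_integral_add, auto)
  qed
  also have "(\<integral>\<^sup>+ z. gR p (L / 2) (snd z) \<partial>\<pi>) = tail p \<mu> (L / 2)"
    unfolding tail_def by (rule nn_snd[OF \<pi>]) simp
  finally show ?thesis .
qed


context cfg
begin

lemma wc_A_le:
  assumes \<pi>: "\<pi> \<in> couplings B \<mu>" and p: "p \<ge> 0"
  shows "wass_cost p A \<mu> \<le> ennreal (2 powr p) * (eN p + cost p \<pi>)"
proof -
  define T where "T = (\<lambda>z::real\<times>real. (S (fst z), snd z))"
  have Tm[measurable]: "T \<in> measurable \<pi> (borel \<Otimes>\<^sub>M borel)"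
    unfolding T_def by (rule couplings_meas[OF \<pi>]) measurable
  have fm: "fst \<in> measurable \<pi> borel" "snd \<in> measurable \<pi> borel"
    by (rule couplings_meas[OF \<pi>], simp)+
  define \<sigma> where "\<sigma> = distr \<pi> (borel \<Otimes>\<^sub>M borel) T"
  have "\<sigma> \<in> couplings A \<mu>"
    unfolding couplings_def
  proof (intro CollectI conjI)
    show "sets \<sigma> = sets (borel \<Otimes>\<^sub>M borel)" by (simp add: \<sigma>_def)
    have "distr \<sigma> borel fst = distr \<pi> borel (fst \<circ> T)"
      unfolding \<sigma>_def by (rule distr_distr) auto
    also have "fst \<circ> T = S \<circ> fst" by (auto simp: T_def)
    also have "distr \<pi> borel (S \<circ> fst) = distr (distr \<pi> borel fst) borel S"
      by (rule distr_distr[symmetric]) (auto simp: fm)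
    also have "\<dots> = A" using couplingsD(2)[OF \<pi>] distr_S by simp
    finally show "distr \<sigma> borel fst = A" .
    have "distr \<sigma> borel snd = distr \<pi> borel (snd \<circ> T)"
      unfolding \<sigma>_def by (rule distr_distr) auto
    also have "snd \<circ> T = snd" by (auto simp: T_def)
    also have "distr \<pi> borel snd = \<mu>" using couplingsD(3)[OF \<pi>] .
    finally show "distr \<sigma> borel snd = \<mu>" .
  qed
  then have "wass_cost p A \<mu> \<le> cost p \<sigma>"
    unfolding wass_cost_cost by (rule INF_lower)
  also have "cost p \<sigma> = (\<integral>\<^sup>+ z. ennreal (\<bar>S (fst z) - snd z\<bar> powr p) \<partial>\<pi>)"
    unfolding cost_def \<sigma>_def by (subst nn_integral_distr[OF Tm], measurable) (simp add: T_def)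
  also have "\<dots> \<le> (\<integral>\<^sup>+ z. ennreal (2 powr p) * (ennreal (\<bar>S (fst z) - fst z\<bar> powr p) + ennreal (\<bar>fst z - snd z\<bar> powr p)) \<partial>\<pi>)"
    by (intro nn_integral_mono powr_tri_enn p)
  also have "\<dots> = ennreal (2 powr p) * ((\<integral>\<^sup>+ z. ennreal (\<bar>S (fst z) - fst z\<bar> powr p) \<partial>\<pi>) + cost p \<pi>)"
  proof -
    have m0[measurable]: "(\<lambda>z. \<bar>fst z - snd z\<bar> powr p) \<in> borel_measurable \<pi>"
      by (rule couplings_meas[OF \<pi>]) measurable
    have m1[measurable]: "(\<lambda>z. \<bar>S (fst z) - fst z\<bar> powr p) \<in> borel_measurable \<pi>"
      by (rule couplings_meas[OF \<pi>]) measurable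
    show ?thesis unfolding cost_def
      by (subst nn_integral_cmult) (measurable, subst nn_integral_add, auto)
  qed
  also have "(\<integral>\<^sup>+ z. ennreal (\<bar>S (fst z) - fst z\<bar> powr p) \<partial>\<pi>) = eN p"
    unfolding eN_def by (rule nn_fst[OF \<pi>]) measurable
  finally show ?thesis .
qed

end

context cfg
begin

lemma S_eq_iff: "k \<le> N \<Longrightarrow> S y = x k \<longleftrightarrow> y \<in> J k"
proof
  assume k: "k \<le> N" "S y = x k"
  obtain j where j: "j \<le> N" "y \<in> J j" using J_exists by blast
  then have "x j = x k" using S_eq k by simp
  then have "j = k" using inj_x j k by (auto simp: inj_on_def)
  then show "y \<in> J k" using j by simp
qed (rule S_eq)

lemma coupling_prob:
  assumes \<pi>: "\<pi> \<in> couplings A \<mu>"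
  shows "prob_space \<pi>"
proof (rule prob_spaceI)
  have sp: "space \<pi> = UNIV" using sets_eq_imp_space_eq[OF couplingsD(1)[OF \<pi>]] by (simp add: space_pair_measure)
  have fm: "fst \<in> measurable \<pi> borel" by (rule couplings_meas[OF \<pi>]) simp
  have "emeasure \<pi> (space \<pi>) = emeasure (distr \<pi> borel fst) UNIV"
    using fm sp by (subst emeasure_distr) auto
  also have "\<dots> = 1" using couplingsD(2)[OF \<pi>] prob_space.emeasure_space_1[OF prob_A] by simp
  finally show "emeasure \<pi> (space \<pi>) = 1" .
qed

lemma AE_fst_atoms:
  assumes \<pi>: "\<pi> \<in> couplings A \<mu>"
  shows "AE z in \<pi>. fst z \<in> x ` {..N}"
proof -
  have Xb: "x ` {..N} \<in> sets borel" by (rule finite_imp_closed[THEN borel_closed]) simp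
  have fm: "fst \<in> measurable \<pi> borel" by (rule couplings_meas[OF \<pi>]) simp
  have "emeasure A (- (x ` {..N})) = 0"
    using Xb by (subst emA) (auto intro!: sum.neutral)
  then have "emeasure (distr \<pi> borel fst) (- (x ` {..N})) = 0" using couplingsD(2)[OF \<pi>] by simp
  then have "emeasure \<pi> (fst -` (- (x ` {..N})) \<inter> space \<pi>) = 0"
    using fm Xb by (subst (asm) emeasure_distr) auto
  moreover have "fst -` (- (x ` {..N})) \<inter> space \<pi> \<in> sets \<pi>"
    using fm Xb by (intro measurable_sets[OF fm]) auto
  ultimately show ?thesis
    by (intro AE_I[of _ _ "fst -` (- (x ` {..N})) \<inter> space \<pi>"]) auto
qed

lemma wc_B_le:
  assumes \<pi>: "\<pi> \<in> couplings A \<mu>" and p: "p \<ge> 0"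
  shows "wass_cost p B \<mu> \<le> ennreal (2 powr p) * (eN p + cost p \<pi>)"
proof -
  interpret Pi: prob_space \<pi> by (rule coupling_prob[OF \<pi>])
  have setsPB: "sets (\<pi> \<Otimes>\<^sub>M B) = sets ((borel \<Otimes>\<^sub>M borel) \<Otimes>\<^sub>M borel)"
    by (rule sets_pair_measure_cong[OF couplingsD(1)[OF \<pi>] sets_B])
  have PB: "f \<in> measurable (\<pi> \<Otimes>\<^sub>M B) M" if "f \<in> measurable ((borel \<Otimes>\<^sub>M borel) \<Otimes>\<^sub>M borel) M" for f and M :: "'z measure"
    using that measurable_cong_sets[OF setsPB refl] by blast
  define c :: ennreal where "c = ennreal (real N + 1)"
  define w where "w = (\<lambda>zy::(real \<times> real) \<times> real. if S (snd zy) = fst (fst zy) then c else 0)"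
  have wm0: "w \<in> borel_measurable ((borel \<Otimes>\<^sub>M borel) \<Otimes>\<^sub>M borel)"
    unfolding w_def by measurable
  have wm[measurable]: "w \<in> borel_measurable (\<pi> \<Otimes>\<^sub>M B)" by (rule PB[OF wm0])
  define D where "D = density (\<pi> \<Otimes>\<^sub>M B) w"
  have c1: "c * ennreal (1 / (N + 1)) = 1"
    unfolding c_def by (subst ennreal_mult[symmetric]) auto
  have inner: "(\<integral>\<^sup>+ y. w (z, y) * h y \<partial>B) = c * (\<integral>\<^sup>+ y. h y * indicator (J k) y \<partial>B)"
    if "k \<le> N" "fst z = x k" "h \<in> borel_measurable borel" for z k h
  proof -
    have "(\<integral>\<^sup>+ y. w (z, y) * h y \<partial>B) = (\<integral>\<^sup>+ y. c * (h y * indicator (J k) y) \<partial>B)"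
      using that by (intro nn_integral_cong) (auto simp: w_def S_eq_iff indicator_def)
    also have "\<dots> = c * (\<integral>\<^sup>+ y. h y * indicator (J k) y \<partial>B)"
    proof (rule nn_integral_cmult)
      have [measurable]: "h \<in> borel_measurable borel" by (rule that)
      show "(\<lambda>y. h y * indicator (J k) y) \<in> borel_measurable B"
        by (subst measurable_cong_sets[OF sets_B refl]) measurable
    qed
    finally show ?thesis .
  qed
  have D1: "(\<integral>\<^sup>+ zy. g (fst zy) \<partial>D) = (\<integral>\<^sup>+ z. g z \<partial>\<pi>)"
    if gm[measurable]: "g \<in> borel_measurable (borel \<Otimes>\<^sub>M borel)" for g
  proof -
    have gm': "g \<in> borel_measurable \<pi>" by (rule couplings_meas[OF \<pi> gm])
    have "(\<integral>\<^sup>+ zy. g (fst zy) \<partial>D) = (\<integral>\<^sup>+ zy. w zy * g (fst zy) \<partial>(\<pi> \<Otimes>\<^sub>M B))"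
      unfolding D_def by (rule nn_integral_density) (auto intro!: PB)
    also have "\<dots> = (\<integral>\<^sup>+ z. \<integral>\<^sup>+ y. w (z, y) * g z \<partial>B \<partial>\<pi>)"
    proof -
      have "(\<lambda>zy. w zy * g (fst zy)) \<in> borel_measurable (\<pi> \<Otimes>\<^sub>M B)"
        by (rule PB) (use wm0 in measurable)
      from Bp.nn_integral_fst[OF this] show ?thesis by simp
    qed
    also have "\<dots> = (\<integral>\<^sup>+ z. g z \<partial>\<pi>)"
    proof (rule nn_integral_cong_AE)
      show "AE z in \<pi>. (\<integral>\<^sup>+ y. w (z, y) * g z \<partial>B) = g z"
        using AE_fst_atoms[OF \<pi>]
      proof eventually_elim
        case (elim z)
        then obtain k where k: "k \<le> N" "fst z = x k" by auto
        have "(\<integral>\<^sup>+ y. w (z, y) * g z \<partial>B) = c * (\<integral>\<^sup>+ y. g z * indicator (J k) y \<partial>B)"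
          by (rule inner[OF k]) simp
        also have "\<dots> = c * (g z * emeasure B (J k))"
          by (simp add: nn_integral_cmult_indicator)
        also have "\<dots> = g z * (c * ennreal (1 / (N + 1)))" using k by (simp add: emB_J mult_ac)
        also have "\<dots> = g z" using c1 by simp
        finally show ?case .
      qed
    qed
    finally show ?thesis .
  qed
  have D2: "(\<integral>\<^sup>+ zy. h (snd zy) \<partial>D) = (\<integral>\<^sup>+ y. h y \<partial>B)"
    if hm[measurable]: "h \<in> borel_measurable borel" for h
  proof -
    define \<phi> where "\<phi> s = (\<integral>\<^sup>+ y. (if S y = s then c else 0) * h y \<partial>B)" for s
    have \<phi>m: "\<phi> \<in> borel_measurable borel"
    proof -
      have "(\<lambda>sy::real \<times> real. (if S (snd sy) = fst sy then c else 0) * h (snd sy)) \<in> borel_measurable (borel \<Otimes>\<^sub>M B)"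
        using measurable_cong_sets[OF sets_pair_measure_cong[OF refl sets_B] refl] by measurable
      from Bp.borel_measurable_nn_integral_fst[OF this] show ?thesis
        unfolding \<phi>_def[abs_def] by simp
    qed
    have "(\<integral>\<^sup>+ zy. h (snd zy) \<partial>D) = (\<integral>\<^sup>+ zy. w zy * h (snd zy) \<partial>(\<pi> \<Otimes>\<^sub>M B))"
      unfolding D_def by (rule nn_integral_density) (auto intro!: PB)
    also have "\<dots> = (\<integral>\<^sup>+ z. \<integral>\<^sup>+ y. w (z, y) * h y \<partial>B \<partial>\<pi>)"
    proof -
      have "(\<lambda>zy. w zy * h (snd zy)) \<in> borel_measurable (\<pi> \<Otimes>\<^sub>M B)"
        by (rule PB) (use wm0 in measurable)
      from Bp.nn_integral_fst[OF this] show ?thesis by simp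
    qed
    also have "\<dots> = (\<integral>\<^sup>+ z. \<phi> (fst z) \<partial>\<pi>)"
      by (intro nn_integral_cong) (simp add: \<phi>_def w_def)
    also have "\<dots> = (\<integral>\<^sup>+ s. \<phi> s \<partial>A)" by (rule nn_fst[OF \<pi> \<phi>m])
    also have "\<dots> = (\<Sum>k\<le>N. \<phi> (x k) * ennreal (1 / (N + 1)))" by (rule nn_A[OF \<phi>m])
    also have "\<dots> = (\<Sum>k\<le>N. \<integral>\<^sup>+ y. h y * indicator (J k) y \<partial>B)"
    proof (intro sum.cong refl)
      fix k assume k: "k \<in> {..N}"
      have "\<phi> (x k) = c * (\<integral>\<^sup>+ y. h y * indicator (J k) y \<partial>B)"
        using inner[of k "(x k, 0)" h] k unfolding \<phi>_def w_def by simp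
      then have "\<phi> (x k) * ennreal (1 / (N + 1)) = (c * ennreal (1 / (N + 1))) * (\<integral>\<^sup>+ y. h y * indicator (J k) y \<partial>B)"
        by (simp add: mult_ac)
      then show "\<phi> (x k) * ennreal (1 / (N + 1)) = (\<integral>\<^sup>+ y. h y * indicator (J k) y \<partial>B)"
        using c1 by simp
    qed
    also have "\<dots> = (\<integral>\<^sup>+ y. h y \<partial>B)" by (rule nn_B_split[symmetric, OF hm])
    finally show ?thesis .
  qed
  have DB: "f \<in> measurable D M" if "f \<in> measurable ((borel \<Otimes>\<^sub>M borel) \<Otimes>\<^sub>M borel) M" for f and M :: "'z measure"
    using PB[OF that] unfolding D_def by (simp add: measurable_cong_sets[OF sets_density refl])
  define F where "F = (\<lambda>zy::(real \<times> real) \<times> real. (snd zy, snd (fst zy)))"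
  have Fm: "F \<in> measurable D (borel \<Otimes>\<^sub>M borel)" unfolding F_def by (rule DB) measurable
  define \<sigma> where "\<sigma> = distr D (borel \<Otimes>\<^sub>M borel) F"
  have margD1: "distr D (borel \<Otimes>\<^sub>M borel) fst = \<pi>"
  proof (rule measure_eqI)
    show "sets (distr D (borel \<Otimes>\<^sub>M borel) fst) = sets \<pi>" using couplingsD(1)[OF \<pi>] by simp
    fix C assume "C \<in> sets (distr D (borel \<Otimes>\<^sub>M borel) fst)"
    then have C[measurable]: "C \<in> sets (borel \<Otimes>\<^sub>M borel)" by simp
    have "emeasure (distr D (borel \<Otimes>\<^sub>M borel) fst) C = (\<integral>\<^sup>+ zy. indicator C (fst zy) \<partial>D)"
      by (rule emeasure_distr_nn) (auto intro!: DB)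
    also have "\<dots> = (\<integral>\<^sup>+ z. indicator C z \<partial>\<pi>)" by (rule D1) simp
    also have "\<dots> = emeasure \<pi> C" using couplingsD(1)[OF \<pi>] C by (intro nn_integral_indicator) simp
    finally show "emeasure (distr D (borel \<Otimes>\<^sub>M borel) fst) C = emeasure \<pi> C" .
  qed
  have "\<sigma> \<in> couplings B \<mu>"
    unfolding couplings_def
  proof (intro CollectI conjI)
    show "sets \<sigma> = sets (borel \<Otimes>\<^sub>M borel)" by (simp add: \<sigma>_def)
    have "distr \<sigma> borel fst = distr D borel (fst \<circ> F)"
      unfolding \<sigma>_def by (rule distr_distr) (auto simp: Fm)
    also have "fst \<circ> F = snd" by (auto simp: F_def)
    also have "distr D borel snd = B"
    proof (rule measure_eqI)
      show "sets (distr D borel snd) = sets B" by simp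
      fix C assume "C \<in> sets (distr D borel snd)"
      then have C[measurable]: "C \<in> sets borel" by simp
      have "emeasure (distr D borel snd) C = (\<integral>\<^sup>+ zy. indicator C (snd zy) \<partial>D)"
        by (rule emeasure_distr_nn) (auto intro!: DB)
      also have "\<dots> = (\<integral>\<^sup>+ y. indicator C y \<partial>B)" by (rule D2) simp
      also have "\<dots> = emeasure B C" by (intro nn_integral_indicator) simp
      finally show "emeasure (distr D borel snd) C = emeasure B C" .
    qed
    finally show "distr \<sigma> borel fst = B" .
    have "distr \<sigma> borel snd = distr D borel (snd \<circ> F)"
      unfolding \<sigma>_def by (rule distr_distr) (auto simp: Fm)
    also have "snd \<circ> F = snd \<circ> fst" by (auto simp: F_def)
    also have "distr D borel (snd \<circ> fst) = distr (distr D (borel \<Otimes>\<^sub>M borel) fst) borel snd"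
      by (rule distr_distr[symmetric]) (auto intro!: DB)
    also have "\<dots> = \<mu>" using margD1 couplingsD(3)[OF \<pi>] by simp
    finally show "distr \<sigma> borel snd = \<mu>" .
  qed
  then have "wass_cost p B \<mu> \<le> cost p \<sigma>"
    unfolding wass_cost_cost by (rule INF_lower)
  also have "cost p \<sigma> = (\<integral>\<^sup>+ zy. ennreal (\<bar>snd zy - snd (fst zy)\<bar> powr p) \<partial>D)"
    unfolding cost_def \<sigma>_def by (subst nn_integral_distr[OF Fm], measurable) (simp add: F_def)
  also have "\<dots> \<le> (\<integral>\<^sup>+ zy. ennreal (2 powr p) * (ennreal (\<bar>snd zy - S (snd zy)\<bar> powr p)
        + ennreal (\<bar>fst (fst zy) - snd (fst zy)\<bar> powr p)) \<partial>D)"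
  proof -
    have m1: "(\<lambda>zy::(real \<times> real) \<times> real. ennreal (\<bar>snd zy - snd (fst zy)\<bar> powr p)) \<in> borel_measurable (\<pi> \<Otimes>\<^sub>M B)"
      by (rule PB) measurable
    have m2: "(\<lambda>zy::(real \<times> real) \<times> real. ennreal (2 powr p) * (ennreal (\<bar>snd zy - S (snd zy)\<bar> powr p)
        + ennreal (\<bar>fst (fst zy) - snd (fst zy)\<bar> powr p))) \<in> borel_measurable (\<pi> \<Otimes>\<^sub>M B)"
      by (rule PB) measurable
    show ?thesis
      unfolding D_def
    proof (subst nn_integral_density[OF wm m1], subst nn_integral_density[OF wm m2], rule nn_integral_mono)
      fix zy :: "(real \<times> real) \<times> real"
      show "w zy * ennreal (\<bar>snd zy - snd (fst zy)\<bar> powr p)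
          \<le> w zy * (ennreal (2 powr p) * (ennreal (\<bar>snd zy - S (snd zy)\<bar> powr p)
              + ennreal (\<bar>fst (fst zy) - snd (fst zy)\<bar> powr p)))"
      proof (cases "S (snd zy) = fst (fst zy)")
        case True
        have "ennreal (\<bar>snd zy - snd (fst zy)\<bar> powr p) \<le> ennreal (2 powr p) * (ennreal (\<bar>snd zy - S (snd zy)\<bar> powr p)
              + ennreal (\<bar>S (snd zy) - snd (fst zy)\<bar> powr p))"
          by (rule powr_tri_enn[OF p])
        then show ?thesis using True by (intro mult_left_mono) auto
      qed (simp add: w_def)
    qed
  qed
  also have "\<dots> = ennreal (2 powr p) * ((\<integral>\<^sup>+ zy. ennreal (\<bar>snd zy - S (snd zy)\<bar> powr p) \<partial>D)
        + (\<integral>\<^sup>+ zy. ennreal (\<bar>fst (fst zy) - snd (fst zy)\<bar> powr p) \<partial>D))"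
  proof -
    have [measurable]: "(\<lambda>zy::(real \<times> real) \<times> real. \<bar>snd zy - S (snd zy)\<bar> powr p) \<in> borel_measurable D"
      by (rule DB) measurable
    have [measurable]: "(\<lambda>zy::(real \<times> real) \<times> real. \<bar>fst (fst zy) - snd (fst zy)\<bar> powr p) \<in> borel_measurable D"
      by (rule DB) measurable
    show ?thesis by (subst nn_integral_cmult) (measurable, subst nn_integral_add, auto)
  qed
  also have "(\<integral>\<^sup>+ zy. ennreal (\<bar>snd zy - S (snd zy)\<bar> powr p) \<partial>D) = eN p"
    unfolding eN_def by (subst D2) (measurable, simp add: abs_minus_commute)
  also have "(\<integral>\<^sup>+ zy. ennreal (\<bar>fst (fst zy) - snd (fst zy)\<bar> powr p) \<partial>D) = cost p \<pi>"
    unfolding cost_def by (rule D1) measurable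
  finally show ?thesis .
qed

end

lemma ennreal_add_lt:
  assumes "a < ennreal x" "b < ennreal y"
  shows "a + b < ennreal x + ennreal y"
proof -
  obtain a' where a': "a = ennreal a'" "a' \<ge> 0" using assms(1) by (cases a) auto
  obtain b' where b': "b = ennreal b'" "b' \<ge> 0" using assms(2) by (cases b) auto
  have x: "x > 0" "a' < x" using assms(1) a' by (auto simp: ennreal_less_iff)
  have y: "y > 0" "b' < y" using assms(2) b' by (auto simp: ennreal_less_iff)
  have "a + b = ennreal (a' + b')" using a' b' by simp
  also have "\<dots> < ennreal (x + y)" using x y a' b' by (intro ennreal_lessI) auto
  also have "\<dots> = ennreal x + ennreal y" using x y by simp
  finally show ?thesis .
qed

lemma equi_int_iff:
  "equi_int_moments p \<mu>s \<longleftrightarrow> (\<forall>\<epsilon>>0. \<exists>L>0. eventually (\<lambda>N. tail p (\<mu>s N) L < ennreal \<epsilon>) sequentially)"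
proof -
  have eq: "(\<lambda>N. \<integral>\<^sup>+ t. ennreal (\<bar>t\<bar> powr p) * indicator (- {-L..L}) t \<partial>(\<mu>s N)) = (\<lambda>N. tail p (\<mu>s N) L)" for L
    by (simp add: tail_def gR_def)
  show ?thesis
    unfolding equi_int_moments_def eq
  proof (intro iffI allI impI)
    fix \<epsilon> :: real assume H: "\<forall>\<epsilon>>0. \<exists>L>0. limsup (\<lambda>N. tail p (\<mu>s N) L) < ennreal \<epsilon>" and e: "\<epsilon> > 0"
    then obtain L where "L > 0" "limsup (\<lambda>N. tail p (\<mu>s N) L) < ennreal \<epsilon>" by blast
    then show "\<exists>L>0. eventually (\<lambda>N. tail p (\<mu>s N) L < ennreal \<epsilon>) sequentially"
      using Limsup_lessD by blast
  next
    fix \<epsilon> :: real assume H: "\<forall>\<epsilon>>0. \<exists>L>0. eventually (\<lambda>N. tail p (\<mu>s N) L < ennreal \<epsilon>) sequentially" and e: "\<epsilon> > 0"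
    then obtain L where L: "L > 0" "eventually (\<lambda>N. tail p (\<mu>s N) L < ennreal (\<epsilon> / 2)) sequentially"
      using half_gt_zero by blast
    have "limsup (\<lambda>N. tail p (\<mu>s N) L) \<le> ennreal (\<epsilon> / 2)"
      using L(2) by (intro Limsup_bounded) (auto elim: eventually_mono)
    also have "\<dots> < ennreal \<epsilon>" using e by (simp add: ennreal_lessI)
    finally show "\<exists>L>0. limsup (\<lambda>N. tail p (\<mu>s N) L) < ennreal \<epsilon>" using L by blast
  qed
qed

lemma tendsto0_iff:
  fixes f :: "nat \<Rightarrow> ennreal"
  shows "(f \<longlonglongrightarrow> 0) \<longleftrightarrow> (\<forall>\<epsilon>>0. eventually (\<lambda>N. f N < ennreal \<epsilon>) sequentially)"
proof
  assume "f \<longlonglongrightarrow> 0"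
  then show "\<forall>\<epsilon>>0. eventually (\<lambda>N. f N < ennreal \<epsilon>) sequentially"
    using order_tendstoD(2)[of f 0 sequentially] by simp
next
  assume H: "\<forall>\<epsilon>>0. eventually (\<lambda>N. f N < ennreal \<epsilon>) sequentially"
  show "f \<longlonglongrightarrow> 0"
  proof (rule order_tendstoI)
    fix a :: ennreal assume "a < 0" then show "eventually (\<lambda>N. a < f N) sequentially" by simp
  next
    fix a :: ennreal assume a: "0 < a"
    show "eventually (\<lambda>N. f N < a) sequentially"
    proof (cases a)
      case (real r)
      then have "r > 0" using a by auto
      then show ?thesis using H real by auto
    next
      case top
      have "eventually (\<lambda>N. f N < ennreal 1) sequentially" using H[rule_format, of 1] by simp
      then show ?thesis
        by (rule eventually_mono) (metis ennreal_less_top order.strict_trans top)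
    qed
  qed
qed

lemma Wp_less_iff:
  assumes p: "p > 0" and e: "\<epsilon> > 0"
  shows "Wp p \<nu> \<mu> < ennreal \<epsilon> \<longleftrightarrow> wass_cost p \<nu> \<mu> < ennreal (\<epsilon> powr p)"
proof (cases "wass_cost p \<nu> \<mu>")
  case (real r)
  then have r: "r \<ge> 0" "wass_cost p \<nu> \<mu> \<noteq> \<infinity>" by auto
  have "Wp p \<nu> \<mu> = ennreal (r powr (1 / p))" using real r by (simp add: Wp_def)
  moreover have "r powr (1 / p) < \<epsilon> \<longleftrightarrow> r < \<epsilon> powr p"
  proof
    assume "r powr (1 / p) < \<epsilon>"
    then have "(r powr (1 / p)) powr p < \<epsilon> powr p" using p by (intro powr_less_mono2) auto
    then show "r < \<epsilon> powr p" using p r by (simp add: powr_powr)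
  next
    assume "r < \<epsilon> powr p"
    then have "r powr (1 / p) < (\<epsilon> powr p) powr (1 / p)" using p r by (intro powr_less_mono2) auto
    then show "r powr (1 / p) < \<epsilon>" using p e by (simp add: powr_powr)
  qed
  ultimately show ?thesis using real e r by (simp add: ennreal_less_iff)
next
  case top
  then show ?thesis by (simp add: Wp_def)
qed

lemma Wp_tendsto_iff:
  assumes p: "p > 0"
  shows "((\<lambda>N. Wp p (\<nu> N) \<mu>) \<longlonglongrightarrow> 0) \<longleftrightarrow> ((\<lambda>N. wass_cost p (\<nu> N) \<mu>) \<longlonglongrightarrow> 0)"
  unfolding tendsto0_iff
proof (intro iffI allI impI)
  fix \<epsilon> :: real assume H: "\<forall>\<epsilon>>0. eventually (\<lambda>N. Wp p (\<nu> N) \<mu> < ennreal \<epsilon>) sequentially" and e: "\<epsilon> > 0"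
  have "eventually (\<lambda>N. Wp p (\<nu> N) \<mu> < ennreal (\<epsilon> powr (1 / p))) sequentially" using H e by auto
  moreover have "(\<epsilon> powr (1 / p)) powr p = \<epsilon>" using p e by (simp add: powr_powr)
  ultimately show "eventually (\<lambda>N. wass_cost p (\<nu> N) \<mu> < ennreal \<epsilon>) sequentially"
    using Wp_less_iff[OF p, of "\<epsilon> powr (1 / p)"] e by (auto elim!: eventually_mono)
next
  fix \<epsilon> :: real assume H: "\<forall>\<epsilon>>0. eventually (\<lambda>N. wass_cost p (\<nu> N) \<mu> < ennreal \<epsilon>) sequentially" and e: "\<epsilon> > 0"
  have "eventually (\<lambda>N. wass_cost p (\<nu> N) \<mu> < ennreal (\<epsilon> powr p)) sequentially" using H e by auto
  then show "eventually (\<lambda>N. Wp p (\<nu> N) \<mu> < ennreal \<epsilon>) sequentially"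
    using Wp_less_iff[OF p e] by (auto elim!: eventually_mono)
qed

lemma tail_mono: "L \<le> L' \<Longrightarrow> tail p \<nu> L' \<le> tail p \<nu> L"
  unfolding tail_def by (intro nn_integral_mono) (auto simp: gR_simp)

lemma tail_small:
  assumes sets: "sets \<mu> = sets borel" and fin: "(\<integral>\<^sup>+ t. ennreal (\<bar>t\<bar> powr p) \<partial>\<mu>) < \<infinity>"
    and e: "\<epsilon> > 0"
  shows "\<exists>L>0. tail p \<mu> L < ennreal \<epsilon>"
proof -
  define f where "f i t = gR p (real i) t" for i t
  have fm[measurable]: "f i \<in> borel_measurable \<mu>" for i
    unfolding f_def using measurable_cong_sets[OF sets refl] gR_meas by blast
  have "(\<integral>\<^sup>+ t. (INF i. f i t) \<partial>\<mu>) = (INF i. integral\<^sup>N \<mu> (f i))"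
  proof (rule nn_integral_monotone_convergence_INF_AE')
    show "AE t in \<mu>. f (Suc i) t \<le> f i t" for i by (auto simp: f_def gR_simp)
    have "(\<integral>\<^sup>+ t. f 0 t \<partial>\<mu>) \<le> (\<integral>\<^sup>+ t. ennreal (\<bar>t\<bar> powr p) \<partial>\<mu>)"
      by (intro nn_integral_mono) (auto simp: f_def gR_simp)
    then show "(\<integral>\<^sup>+ t. f 0 t \<partial>\<mu>) < \<infinity>" using fin by simp
  qed simp
  moreover have "(INF i. f i t) = 0" for t
  proof -
    obtain i :: nat where "\<bar>t\<bar> < real i" using reals_Archimedean2 by blast
    then have "f i t = 0" by (auto simp: f_def gR_simp)
    then show ?thesis by (metis INF_lower UNIV_I le_zero_eq)
  qed
  moreover have "integral\<^sup>N \<mu> (f i) = tail p \<mu> (real i)" for i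
    by (simp add: f_def[abs_def] tail_def)
  ultimately have "(INF i. tail p \<mu> (real i)) = 0" by simp
  then have "(INF i. tail p \<mu> (real i)) < ennreal \<epsilon>" using e by simp
  then obtain i where "tail p \<mu> (real i) < ennreal \<epsilon>" by (auto simp: INF_less_iff)
  moreover have "tail p \<mu> (real i + 1) \<le> tail p \<mu> (real i)" by (rule tail_mono) simp
  ultimately show ?thesis by (intro exI[of _ "real i + 1"]) auto
qed

lemma moment_coupling:
  assumes \<pi>: "\<pi> \<in> couplings \<nu> \<mu>" and p: "p \<ge> 0"
  shows "(\<integral>\<^sup>+ t. ennreal (\<bar>t\<bar> powr p) \<partial>\<mu>) \<le> ennreal (2 powr p) * (cost p \<pi> + (\<integral>\<^sup>+ s. ennreal (\<bar>s\<bar> powr p) \<partial>\<nu>))"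
proof -
  have m0[measurable]: "(\<lambda>z. \<bar>fst z - snd z\<bar> powr p) \<in> borel_measurable \<pi>"
    by (rule couplings_meas[OF \<pi>]) measurable
  have m1[measurable]: "(\<lambda>z. \<bar>fst z\<bar> powr p) \<in> borel_measurable \<pi>"
    by (rule couplings_meas[OF \<pi>]) measurable
  have "(\<integral>\<^sup>+ t. ennreal (\<bar>t\<bar> powr p) \<partial>\<mu>) = (\<integral>\<^sup>+ z. ennreal (\<bar>snd z\<bar> powr p) \<partial>\<pi>)"
    by (rule nn_snd[OF \<pi>, symmetric]) measurable
  also have "\<dots> \<le> (\<integral>\<^sup>+ z. ennreal (2 powr p) * (ennreal (\<bar>fst z - snd z\<bar> powr p) + ennreal (\<bar>fst z\<bar> powr p)) \<partial>\<pi>)"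
  proof (rule nn_integral_mono)
    fix z :: "real \<times> real"
    have "ennreal (\<bar>snd z - 0\<bar> powr p) \<le> ennreal (2 powr p) * (ennreal (\<bar>snd z - fst z\<bar> powr p) + ennreal (\<bar>fst z - 0\<bar> powr p))"
      by (rule powr_tri_enn[OF p])
    then show "ennreal (\<bar>snd z\<bar> powr p) \<le> ennreal (2 powr p) * (ennreal (\<bar>fst z - snd z\<bar> powr p) + ennreal (\<bar>fst z\<bar> powr p))"
      by (simp add: abs_minus_commute)
  qed
  also have "\<dots> = ennreal (2 powr p) * (cost p \<pi> + (\<integral>\<^sup>+ z. ennreal (\<bar>fst z\<bar> powr p) \<partial>\<pi>))"
    unfolding cost_def by (subst nn_integral_cmult) (measurable, subst nn_integral_add, auto)
  also have "(\<integral>\<^sup>+ z. ennreal (\<bar>fst z\<bar> powr p) \<partial>\<pi>) = (\<integral>\<^sup>+ s. ennreal (\<bar>s\<bar> powr p) \<partial>\<nu>)"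
    by (rule nn_fst[OF \<pi>]) measurable
  finally show ?thesis .
qed

lemma tail_small_W:
  assumes W: "eventually (\<lambda>N. wass_cost p (\<nu> N) \<mu> < ennreal \<delta>) sequentially"
    and \<mu>L: "tail p \<mu> L0 < ennreal \<delta>" and p: "p \<ge> 0" and L0: "L0 \<ge> 0" and d: "\<delta> > 0"
  shows "eventually (\<lambda>N. tail p (\<nu> N) (2 * L0) < ennreal (2 powr p * (2 * \<delta>))) sequentially"
  using W
proof eventually_elim
  case (elim N)
  then obtain \<pi> where \<pi>: "\<pi> \<in> couplings (\<nu> N) \<mu>" "cost p \<pi> < ennreal \<delta>"
    by (auto simp: wass_cost_cost INF_less_iff)
  have "tail p (\<nu> N) (2 * L0) \<le> ennreal (2 powr p) * (cost p \<pi> + tail p \<mu> (2 * L0 / 2))"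
    by (rule tail_coupling[OF \<pi>(1) p]) (use L0 in simp)
  also have "\<dots> < ennreal (2 powr p) * (ennreal \<delta> + ennreal \<delta>)"
  proof -
    have "cost p \<pi> + tail p \<mu> L0 < ennreal \<delta> + ennreal \<delta>"
      using \<pi>(2) \<mu>L by (rule ennreal_add_lt)
    then show ?thesis by (intro ennreal_mult_strict_left_mono) auto
  qed
  also have "\<dots> = ennreal (2 powr p * (2 * \<delta>))"
    using d by (simp add: ennreal_mult[symmetric] ennreal_plus[symmetric] del: ennreal_plus)
  finally show ?case .
qed


lemma ev_over_n: "\<epsilon> > 0 \<Longrightarrow> eventually (\<lambda>N. c / real N < \<epsilon>) sequentially"
  using order_tendstoD(2)[OF lim_const_over_n[of c]] by simp

lemma cc_props:
  fixes f :: "real \<Rightarrow> real"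
  assumes cont: "continuous_on UNIV f" and comp: "compact (closure {t. f t \<noteq> 0})"
  obtains L Bd where "L > 0" "Bd \<ge> 0" "\<And>y. \<bar>f y\<bar> \<le> Bd" "\<And>y. f (cl L y) = f y"
    "uniformly_continuous_on {-L..L} f"
proof -
  from compact_imp_bounded[OF comp] obtain L0 where L00: "\<forall>y\<in>closure {t. f t \<noteq> 0}. norm y \<le> L0"
    unfolding bounded_iff by blast
  have L0: "\<And>y. y \<in> closure {t. f t \<noteq> 0} \<Longrightarrow> \<bar>y\<bar> \<le> L0" using L00 by simp
  define L where "L = max L0 0 + 1"
  have Lpos: "L > 0" unfolding L_def by (auto simp: max_def)
  have L0L: "L0 < L" unfolding L_def by (auto simp: max_def)
  have f0: "f y = 0" if "L \<le> \<bar>y\<bar>" for y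
  proof (rule ccontr)
    assume "f y \<noteq> 0"
    then have "y \<in> closure {t. f t \<noteq> 0}" by (intro subsetD[OF closure_subset]) simp
    then have "\<bar>y\<bar> \<le> L0" by (rule L0)
    then show False using that L0L by linarith
  qed
  have fcl: "f (cl L y) = f y" for y
  proof (cases "\<bar>y\<bar> \<le> L")
    case True then show ?thesis by (simp add: cl_def)
  next
    case False
    have a: "f L = 0" "f (- L) = 0" using f0[of L] f0[of "-L"] Lpos by simp_all
    have b: "f y = 0" using f0[of y] False by simp
    show ?thesis
    proof (cases "y > L")
      case True
      then have "cl L y = L" using Lpos by (simp add: cl_def)
      then show ?thesis using a b by simp
    next
      case False
      then have "y < - L" using \<open>\<not> \<bar>y\<bar> \<le> L\<close> by simp
      then have "cl L y = - L" using Lpos by (simp add: cl_def)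
      then show ?thesis using a b by simp
    qed
  qed
  have "compact (f ` {-L..L})"
    by (rule compact_continuous_image[OF continuous_on_subset[OF cont]]) auto
  then have "bounded (f ` {-L..L})" by (rule compact_imp_bounded)
  then obtain Bd0 where "\<forall>z\<in>f ` {-L..L}. norm z \<le> Bd0" unfolding bounded_iff by blast
  then have Bd0: "\<And>y. y \<in> {-L..L} \<Longrightarrow> \<bar>f y\<bar> \<le> Bd0" by simp
  have bd: "\<bar>f y\<bar> \<le> max Bd0 0" for y
  proof -
    have "cl L y \<in> {-L..L}" using cl_lo[of L y] cl_hi[of L y] Lpos by auto
    then have "\<bar>f (cl L y)\<bar> \<le> Bd0" by (rule Bd0)
    then show ?thesis using fcl[of y] by simp
  qed
  have uc: "uniformly_continuous_on {-L..L} f"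
    by (rule compact_uniformly_continuous[OF continuous_on_subset[OF cont]]) auto
  show ?thesis by (rule that[OF Lpos _ bd fcl uc]) simp
qed

locale seqc =
  fixes x :: "nat \<Rightarrow> nat \<Rightarrow> real" and p :: real and \<mu> :: "real measure"
  assumes cfgN: "\<And>N. N \<ge> 1 \<Longrightarrow> cfg N (x N)" and p1: "p \<ge> 1" and pr: "prob_real \<mu>"
begin

abbreviation "a N \<equiv> EM N (x N)"
abbreviation "b N \<equiv> PC N (x N)"

lemma vague_diff:
  fixes f :: "real \<Rightarrow> real"
  assumes cont: "continuous_on UNIV f" and comp: "compact (closure {t. f t \<noteq> 0})"
  shows "(\<lambda>N. (\<integral>y. f y \<partial>b N) - (\<integral>y. f y \<partial>a N)) \<longlonglongrightarrow> 0"
proof -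
  have fm: "f \<in> borel_measurable borel" by (rule borel_measurable_continuous_onI[OF cont])
  obtain L Bd where L: "L > 0" and Bd: "Bd \<ge> 0" "\<And>y. \<bar>f y\<bar> \<le> Bd"
    and fcl: "\<And>y. f (cl L y) = f y" and uc: "uniformly_continuous_on {-L..L} f"
    using cc_props[OF cont comp] by blast
  show ?thesis
  proof (rule tendstoI)
    fix r :: real assume r: "r > 0"
    define \<epsilon> where "\<epsilon> = r / 3"
    have e: "\<epsilon> > 0" using r by (simp add: \<epsilon>_def)
    obtain \<delta> where d: "\<delta> > 0" and dd: "\<And>s t. s \<in> {-L..L} \<Longrightarrow> t \<in> {-L..L} \<Longrightarrow> dist t s < \<delta> \<Longrightarrow> dist (f t) (f s) < \<epsilon>"
      using uc e unfolding uniformly_continuous_on_def by blast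
    define K where "K = 2 * Bd / \<delta>"
    have K: "K \<ge> 0" using Bd d by (simp add: K_def)
    have lip: "\<bar>f s - f t\<bar> \<le> \<epsilon> + K * \<bar>cl L s - cl L t\<bar>" for s t
    proof -
      have in1: "cl L s \<in> {-L..L}" "cl L t \<in> {-L..L}" using cl_lo cl_hi L by (auto simp: less_imp_le)
      show ?thesis
      proof (cases "\<bar>cl L s - cl L t\<bar> < \<delta>")
        case True
        then have "\<bar>f (cl L s) - f (cl L t)\<bar> < \<epsilon>" using dd[OF in1(2) in1(1)] by (simp add: dist_real_def)
        then show ?thesis using fcl K by (simp add: add_increasing2)
      next
        case False
        have "\<bar>f s - f t\<bar> \<le> 2 * Bd" using Bd(2)[of s] Bd(2)[of t] by linarith
        also have "2 * Bd = K * \<delta>" using d by (simp add: K_def)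
        also have "K * \<delta> \<le> K * \<bar>cl L s - cl L t\<bar>" using False K by (intro mult_left_mono) auto
        finally show ?thesis using e by linarith
      qed
    qed
    have ev: "eventually (\<lambda>N. K * (2 * L) / real N < \<epsilon>) sequentially" by (rule ev_over_n[OF e])
    then have "eventually (\<lambda>N. N \<ge> 1 \<and> K * (2 * L) / real N < \<epsilon>) sequentially"
      using eventually_ge_at_top[of 1] by eventually_elim auto
    then show "eventually (\<lambda>N. dist ((\<integral>y. f y \<partial>b N) - (\<integral>y. f y \<partial>a N)) 0 < r) sequentially"
    proof eventually_elim
      case (elim N)
      have c: "cfg N (x N)" using cfgN elim by simp
      have "\<bar>(\<integral>y. f y \<partial>b N) - (\<integral>y. f y \<partial>a N)\<bar> \<le> \<epsilon> + K * (2 * L / N)"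
        by (rule cfg.int_diff[OF c fm Bd(2) _ K lip]) (use L in simp)
      also have "\<dots> < r"
      proof -
        from elim have h: "K * (2 * L / real N) < \<epsilon>" by (simp only: times_divide_eq_right)
        then show ?thesis using r \<epsilon>_def by linarith
      qed
      finally show ?case by (simp add: dist_real_def)
    qed
  qed
qed

lemma part1: "vague_conv a \<mu> \<longleftrightarrow> vague_conv b \<mu>"
  unfolding vague_conv_def
proof (intro iffI allI impI)
  fix f :: "real \<Rightarrow> real"
  assume H: "\<forall>f::real\<Rightarrow>real. continuous_on UNIV f \<and> compact (closure {t. f t \<noteq> 0}) \<longrightarrow> (\<lambda>N. integral\<^sup>L (a N) f) \<longlonglongrightarrow> integral\<^sup>L \<mu> f"
    and f: "continuous_on UNIV f \<and> compact (closure {t. f t \<noteq> 0})"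
  have d: "(\<lambda>N. (\<integral>y. f y \<partial>b N) - (\<integral>y. f y \<partial>a N)) \<longlonglongrightarrow> 0" using vague_diff[OF conjunct1[OF f] conjunct2[OF f]] .
  have h: "(\<lambda>N. integral\<^sup>L (a N) f) \<longlonglongrightarrow> integral\<^sup>L \<mu> f" using H f by fast
  have "(\<lambda>N. ((\<integral>y. f y \<partial>b N) - (\<integral>y. f y \<partial>a N)) + integral\<^sup>L (a N) f) \<longlonglongrightarrow> 0 + integral\<^sup>L \<mu> f"
    by (rule tendsto_add[OF d h])
  then show "(\<lambda>N. integral\<^sup>L (b N) f) \<longlonglongrightarrow> integral\<^sup>L \<mu> f" by simp
next
  fix f :: "real \<Rightarrow> real"
  assume H: "\<forall>f::real\<Rightarrow>real. continuous_on UNIV f \<and> compact (closure {t. f t \<noteq> 0}) \<longrightarrow> (\<lambda>N. integral\<^sup>L (b N) f) \<longlonglongrightarrow> integral\<^sup>L \<mu> f"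
    and f: "continuous_on UNIV f \<and> compact (closure {t. f t \<noteq> 0})"
  have d: "(\<lambda>N. (\<integral>y. f y \<partial>b N) - (\<integral>y. f y \<partial>a N)) \<longlonglongrightarrow> 0" using vague_diff[OF conjunct1[OF f] conjunct2[OF f]] .
  have h: "(\<lambda>N. integral\<^sup>L (b N) f) \<longlonglongrightarrow> integral\<^sup>L \<mu> f" using H f by fast
  have "(\<lambda>N. integral\<^sup>L (b N) f - ((\<integral>y. f y \<partial>b N) - (\<integral>y. f y \<partial>a N))) \<longlonglongrightarrow> integral\<^sup>L \<mu> f - 0"
    by (rule tendsto_diff[OF h d])
  then show "(\<lambda>N. integral\<^sup>L (a N) f) \<longlonglongrightarrow> integral\<^sup>L \<mu> f" by simp
qed


lemma tail_a_fin: "N \<ge> 1 \<Longrightarrow> tail p (a N) L < \<top>"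
proof -
  assume N: "N \<ge> 1"
  have "tail p (a N) L = (\<Sum>k\<le>N. gR p L (x N k) * ennreal (1 / (N + 1)))"
    by (rule cfg.tail_A[OF cfgN[OF N]])
  also have "\<dots> < \<top>" by (simp add: gR_simp ennreal_mult_less_top)
  finally show ?thesis .
qed

lemma ennreal_mult_lt: assumes c: "c > 0" and t: "t < ennreal r" shows "ennreal c * t < ennreal (c * r)"
proof -
  obtain t' where t': "t = ennreal t'" "t' \<ge> 0" using t by (cases t) auto
  have "t' < r" "r > 0" using t t' by (auto simp: ennreal_less_iff)
  then have "c * t' < c * r" using c by simp
  then have "ennreal (c * t') < ennreal (c * r)" using c \<open>r > 0\<close> by (intro ennreal_lessI) auto
  then show ?thesis using t' c by (simp add: ennreal_mult)
qed

lemma part2: "equi_int_moments p a \<longleftrightarrow> equi_int_moments p b"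
  unfolding equi_int_iff
proof (intro iffI allI impI)
  fix \<epsilon> :: real assume H: "\<forall>\<epsilon>>0. \<exists>L>0. eventually (\<lambda>N. tail p (a N) L < ennreal \<epsilon>) sequentially" and e: "\<epsilon> > 0"
  then obtain L where L: "L > 0" "eventually (\<lambda>N. tail p (a N) L < ennreal (\<epsilon> / 4)) sequentially"
    by (metis divide_pos_pos zero_less_numeral)
  have "eventually (\<lambda>N. tail p (b N) L < ennreal \<epsilon>) sequentially"
    using L(2) eventually_ge_at_top[of 1]
  proof eventually_elim
    case (elim N)
    have "tail p (b N) L \<le> 4 * tail p (a N) L"
      by (rule cfg.Q1[OF cfgN]) (use elim p1 in auto)
    also have "\<dots> = ennreal 4 * tail p (a N) L" by simp
    also have "\<dots> < ennreal (4 * (\<epsilon> / 4))" by (rule ennreal_mult_lt) (use elim in auto)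
    finally show ?case by simp
  qed
  then show "\<exists>L>0. eventually (\<lambda>N. tail p (b N) L < ennreal \<epsilon>) sequentially" using L by blast
next
  fix \<epsilon> :: real assume H: "\<forall>\<epsilon>>0. \<exists>L>0. eventually (\<lambda>N. tail p (b N) L < ennreal \<epsilon>) sequentially" and e: "\<epsilon> > 0"
  define C where "C = 2 powr (p + 3)"
  have C: "C > 0" by (simp add: C_def)
  obtain L where L: "L > 0" "eventually (\<lambda>N. tail p (b N) L < ennreal (\<epsilon> / C)) sequentially"
    using H e C by (meson divide_pos_pos)
  have "eventually (\<lambda>N. tail p (a N) (2 * L) < ennreal \<epsilon>) sequentially"
    using L(2) eventually_ge_at_top[of 1]
  proof eventually_elim
    case (elim N)
    have "tail p (a N) (2 * L) \<le> ennreal C * tail p (b N) L"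
      unfolding C_def by (rule cfg.Q2[OF cfgN]) (use elim p1 L in auto)
    also have "\<dots> < ennreal (C * (\<epsilon> / C))" by (rule ennreal_mult_lt[OF C]) (use elim in auto)
    finally show ?case using C by simp
  qed
  then show "\<exists>L>0. eventually (\<lambda>N. tail p (a N) L < ennreal \<epsilon>) sequentially" using L
    by (intro exI[of _ "2 * L"]) auto
qed

lemma eN_to_0:
  assumes T: "\<forall>\<epsilon>>0. \<exists>L>0. eventually (\<lambda>N. tail p (a N) L < ennreal \<epsilon>) sequentially"
  shows "\<forall>\<epsilon>>0. eventually (\<lambda>N. cfg.eN N (x N) p < ennreal \<epsilon>) sequentially"
proof (intro allI impI)
  fix \<epsilon> :: real assume e: "\<epsilon> > 0"
  define C where "C = 4 * 2 powr p"
  have C: "C > 0" by (simp add: C_def)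
  obtain L where L: "L > 0" "eventually (\<lambda>N. tail p (a N) L < ennreal (\<epsilon> / 2 / C)) sequentially"
    using T e C by (meson divide_pos_pos zero_less_numeral)
  have ev: "eventually (\<lambda>N. (2 * L) powr p / real N < \<epsilon> / 2) sequentially"
    by (rule ev_over_n) (use e in simp)
  show "eventually (\<lambda>N. cfg.eN N (x N) p < ennreal \<epsilon>) sequentially"
    using L(2) ev eventually_ge_at_top[of 1]
  proof eventually_elim
    case (elim N)
    have "cfg.eN N (x N) p \<le> ennreal ((2 * L) powr p / N) + ennreal C * tail p (a N) L"
      unfolding C_def by (rule cfg.eN_bound[OF cfgN]) (use elim p1 L in auto)
    also have "\<dots> < ennreal (\<epsilon> / 2) + ennreal (C * (\<epsilon> / 2 / C))"
    proof (rule ennreal_add_lt)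
      show "ennreal ((2 * L) powr p / N) < ennreal (\<epsilon> / 2)" using elim e by (intro ennreal_lessI) auto
      show "ennreal C * tail p (a N) L < ennreal (C * (\<epsilon> / 2 / C))" by (rule ennreal_mult_lt[OF C]) (use elim in auto)
    qed
    also have "ennreal (\<epsilon> / 2) + ennreal (C * (\<epsilon> / 2 / C)) = ennreal \<epsilon>"
      using C e by (simp add: ennreal_plus[symmetric] del: ennreal_plus)
    finally show ?case .
  qed
qed

lemma W_transfer:
  fixes src tgt :: "nat \<Rightarrow> real measure"
  assumes E: "\<forall>\<epsilon>>0. eventually (\<lambda>N. cfg.eN N (x N) p < ennreal \<epsilon>) sequentially"
    and W: "\<forall>\<epsilon>>0. eventually (\<lambda>N. wass_cost p (src N) \<mu> < ennreal \<epsilon>) sequentially"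
    and Cpl: "\<And>N \<pi>. N \<ge> 1 \<Longrightarrow> \<pi> \<in> couplings (src N) \<mu> \<Longrightarrow> wass_cost p (tgt N) \<mu> \<le> ennreal (2 powr p) * (cfg.eN N (x N) p + cost p \<pi>)"
  shows "\<forall>\<epsilon>>0. eventually (\<lambda>N. wass_cost p (tgt N) \<mu> < ennreal \<epsilon>) sequentially"
proof (intro allI impI)
  fix \<epsilon> :: real assume e: "\<epsilon> > 0"
  define \<delta> where "\<delta> = \<epsilon> / 2 / 2 powr p"
  have d: "\<delta> > 0" using e by (simp add: \<delta>_def)
  show "eventually (\<lambda>N. wass_cost p (tgt N) \<mu> < ennreal \<epsilon>) sequentially"
    using E[rule_format, OF d] W[rule_format, OF d] eventually_ge_at_top[of 1]
  proof eventually_elim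
    case (elim N)
    then obtain \<pi> where \<pi>: "\<pi> \<in> couplings (src N) \<mu>" "cost p \<pi> < ennreal \<delta>"
      by (auto simp: wass_cost_cost INF_less_iff)
    have "wass_cost p (tgt N) \<mu> \<le> ennreal (2 powr p) * (cfg.eN N (x N) p + cost p \<pi>)"
      using Cpl[OF _ \<pi>(1)] elim by simp
    also have "\<dots> < ennreal (2 powr p * (\<delta> + \<delta>))"
    proof (rule ennreal_mult_lt)
      show "cfg.eN N (x N) p + cost p \<pi> < ennreal (\<delta> + \<delta>)"
        using ennreal_add_lt[OF elim(1) \<pi>(2)] d by (simp add: ennreal_plus[symmetric] del: ennreal_plus)
    qed simp
    also have "2 powr p * (\<delta> + \<delta>) = \<epsilon>" by (simp add: \<delta>_def)
    finally show ?case .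
  qed
qed

lemma tails_from_W:
  assumes W: "\<forall>\<epsilon>>0. eventually (\<lambda>N. wass_cost p (\<nu> N) \<mu> < ennreal \<epsilon>) sequentially"
    and fin: "(\<integral>\<^sup>+ t. ennreal (\<bar>t\<bar> powr p) \<partial>\<mu>) < \<infinity>"
  shows "\<forall>\<epsilon>>0. \<exists>L>0. eventually (\<lambda>N. tail p (\<nu> N) L < ennreal \<epsilon>) sequentially"
proof (intro allI impI)
  fix \<epsilon> :: real assume e: "\<epsilon> > 0"
  define \<delta> where "\<delta> = \<epsilon> / 2 / 2 powr p"
  have d: "\<delta> > 0" using e by (simp add: \<delta>_def)
  have sets: "sets \<mu> = sets borel" using pr by (simp add: prob_real_def)
  obtain L0 where L0: "L0 > 0" "tail p \<mu> L0 < ennreal \<delta>" using tail_small[OF sets fin d] by blast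
  have "eventually (\<lambda>N. tail p (\<nu> N) (2 * L0) < ennreal (2 powr p * (2 * \<delta>))) sequentially"
    by (rule tail_small_W[OF W[rule_format, OF d] L0(2)]) (use p1 L0 d in auto)
  moreover have "2 powr p * (2 * \<delta>) = \<epsilon>" by (simp add: \<delta>_def)
  ultimately show "\<exists>L>0. eventually (\<lambda>N. tail p (\<nu> N) L < ennreal \<epsilon>) sequentially"
    using L0 by (intro exI[of _ "2 * L0"]) auto
qed

lemma moment_mu:
  assumes W: "\<forall>\<epsilon>>0. eventually (\<lambda>N. wass_cost p (\<nu> N) \<mu> < ennreal \<epsilon>) sequentially"
    and fin: "\<And>N. N \<ge> 1 \<Longrightarrow> (\<integral>\<^sup>+ s. ennreal (\<bar>s\<bar> powr p) \<partial>\<nu> N) < \<infinity>"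
  shows "(\<integral>\<^sup>+ t. ennreal (\<bar>t\<bar> powr p) \<partial>\<mu>) < \<infinity>"
proof -
  have "eventually (\<lambda>N. N \<ge> 1 \<and> wass_cost p (\<nu> N) \<mu> < ennreal 1) sequentially"
    using W[rule_format, OF zero_less_one] eventually_ge_at_top[of 1] by eventually_elim auto
  then obtain N where N: "N \<ge> 1" "wass_cost p (\<nu> N) \<mu> < ennreal 1"
    using eventually_happens'[OF sequentially_bot] by blast
  then obtain \<pi> where \<pi>: "\<pi> \<in> couplings (\<nu> N) \<mu>" "cost p \<pi> < ennreal 1"
    by (auto simp: wass_cost_cost INF_less_iff)
  have "(\<integral>\<^sup>+ t. ennreal (\<bar>t\<bar> powr p) \<partial>\<mu>) \<le> ennreal (2 powr p) * (cost p \<pi> + (\<integral>\<^sup>+ s. ennreal (\<bar>s\<bar> powr p) \<partial>\<nu> N))"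
    by (rule moment_coupling[OF \<pi>(1)]) (use p1 in simp)
  also have "\<dots> < \<infinity>"
  proof -
    have c: "cost p \<pi> < \<top>" using order_less_trans[OF \<pi>(2) ennreal_less_top] by simp
    have f: "(\<integral>\<^sup>+ s. ennreal (\<bar>s\<bar> powr p) \<partial>\<nu> N) < \<top>" using fin[OF N(1)] by simp
    have "cost p \<pi> + (\<integral>\<^sup>+ s. ennreal (\<bar>s\<bar> powr p) \<partial>\<nu> N) < \<top>" using c f by simp
    then show ?thesis by (simp add: ennreal_mult_less_top)
  qed
  finally show ?thesis .
qed

lemma gR0: "gR p 0 t = ennreal (\<bar>t\<bar> powr p)"
  by (cases "t = 0") (auto simp: gR_simp)

lemma part3: "((\<lambda>N. Wp p (a N) \<mu>) \<longlonglongrightarrow> 0) \<longleftrightarrow> ((\<lambda>N. Wp p (b N) \<mu>) \<longlonglongrightarrow> 0)"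
proof -
  have pp: "p > 0" using p1 by simp
  have finA: "(\<integral>\<^sup>+ s. ennreal (\<bar>s\<bar> powr p) \<partial>a N) < \<infinity>" if "N \<ge> 1" for N
    using tail_a_fin[OF that, of 0] by (simp add: tail_def gR0)
  have finB: "(\<integral>\<^sup>+ s. ennreal (\<bar>s\<bar> powr p) \<partial>b N) < \<infinity>" if N: "N \<ge> 1" for N
  proof -
    have "tail p (b N) 0 \<le> 4 * tail p (a N) 0" by (rule cfg.Q1[OF cfgN[OF N]]) (use p1 in simp)
    also have "\<dots> < \<infinity>" using tail_a_fin[OF N, of 0] by (simp add: ennreal_mult_less_top)
    finally show ?thesis by (simp add: tail_def gR0)
  qed
  have "((\<lambda>N. wass_cost p (a N) \<mu>) \<longlonglongrightarrow> 0) \<longleftrightarrow> ((\<lambda>N. wass_cost p (b N) \<mu>) \<longlonglongrightarrow> 0)"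
    unfolding tendsto0_iff
  proof
    assume WA: "\<forall>\<epsilon>>0. eventually (\<lambda>N. wass_cost p (a N) \<mu> < ennreal \<epsilon>) sequentially"
    have fm: "(\<integral>\<^sup>+ t. ennreal (\<bar>t\<bar> powr p) \<partial>\<mu>) < \<infinity>" by (rule moment_mu[OF WA finA])
    have TA: "\<forall>\<epsilon>>0. \<exists>L>0. eventually (\<lambda>N. tail p (a N) L < ennreal \<epsilon>) sequentially"
      by (rule tails_from_W[OF WA fm])
    show "\<forall>\<epsilon>>0. eventually (\<lambda>N. wass_cost p (b N) \<mu> < ennreal \<epsilon>) sequentially"
      by (rule W_transfer[OF eN_to_0[OF TA] WA]) (rule cfg.wc_B_le[OF cfgN], use p1 in auto)
  next
    assume WB: "\<forall>\<epsilon>>0. eventually (\<lambda>N. wass_cost p (b N) \<mu> < ennreal \<epsilon>) sequentially"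
    have fm: "(\<integral>\<^sup>+ t. ennreal (\<bar>t\<bar> powr p) \<partial>\<mu>) < \<infinity>" by (rule moment_mu[OF WB finB])
    have TB: "\<forall>\<epsilon>>0. \<exists>L>0. eventually (\<lambda>N. tail p (b N) L < ennreal \<epsilon>) sequentially"
      by (rule tails_from_W[OF WB fm])
    have "equi_int_moments p b" unfolding equi_int_iff by (rule TB)
    then have TA: "\<forall>\<epsilon>>0. \<exists>L>0. eventually (\<lambda>N. tail p (a N) L < ennreal \<epsilon>) sequentially"
      using part2 unfolding equi_int_iff by blast
    show "\<forall>\<epsilon>>0. eventually (\<lambda>N. wass_cost p (a N) \<mu> < ennreal \<epsilon>) sequentially"
      by (rule W_transfer[OF eN_to_0[OF TA] WB]) (rule cfg.wc_A_le[OF cfgN], use p1 in auto)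
  qed
  then show ?thesis using Wp_tendsto_iff[OF pp] by simp
qed

end
lemma KN_cfg: assumes "KN N M x" "M > 0" "N \<ge> 1" shows "cfg N x"
proof
  show "1 \<le> N" by (rule assms(3))
  fix i assume i: "i < N"
  have "1 / (real N * M) > 0" using assms by simp
  moreover have "x (Suc i) - x i \<ge> 1 / (real N * M)" using assms(1) i by (simp add: KN_def)
  ultimately show "x i < x (Suc i)" by linarith
qed

theorem lemma5p1:
  fixes p M :: real and x :: "nat \<Rightarrow> nat \<Rightarrow> real" and \<mu> :: "real measure"
  assumes "p \<ge> 1" and "M > 0"
    and "\<And>N. N \<ge> 1 \<Longrightarrow> KN N M (x N)"
    and "prob_real \<mu>"
  shows "(vague_conv (\<lambda>N. EM N (x N)) \<mu> \<longleftrightarrow> vague_conv (\<lambda>N. PC N (x N)) \<mu>)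
       \<and> (equi_int_moments p (\<lambda>N. EM N (x N)) \<longleftrightarrow> equi_int_moments p (\<lambda>N. PC N (x N)))
       \<and> ((\<lambda>N. Wp p (EM N (x N)) \<mu>) \<longlonglongrightarrow> 0 \<longleftrightarrow> (\<lambda>N. Wp p (PC N (x N)) \<mu>) \<longlonglongrightarrow> 0)"
proof -
  have "seqc x p \<mu>"
  proof (rule seqc.intro)
    show "\<And>N. N \<ge> 1 \<Longrightarrow> cfg N (x N)" using KN_cfg assms(2,3) by blast
  qed (use assms in auto)
  then interpret s: seqc x p \<mu> .
  show ?thesis using s.part1 s.part2 s.part3 by blast
qed

end
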